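(* Let $A>0$ and suppose all antenna positions lie in the square $[-A/2,A/2]^2$. Assume $\mathbf A$ has full column rank, the matrix $\boldsymbol\Phi=\frac{2}{\sigma^2}\Re\{(\mathbf 1_2\otimes\mathbf R_{\mathbf S}^{\mathsf T})\odot\dot{\mathbf A}^{\mathsf H}\boldsymbol\Pi_{\mathbf A}^\perp\dot{\mathbf A}\}$ is positive definite (so $\mathrm{CRB}(\tilde{\mathbf q})=\boldsymbol\Phi^{-1}$), $\mathrm{var}(\tilde{\mathbf x})>0$, $\mathrm{var}(\tilde{\mathbf y})>0$, $\mathrm{var}(\tilde{\mathbf x})\mathrm{var}(\tilde{\mathbf y})>\mathrm{cov}(\tilde{\mathbf x},\tilde{\mathbf y})^2$, and the signal energies are equal: $\|\mathbf s_k\|_2^2=TP_{\mathrm s}$ for all $k$, with $P_{\mathrm s}>0$. Then $$\mathrm{tr}\big(\mathrm{CRB}(\tilde{\mathbf q})\big)\overset{(a)}{\ge}\frac{K\sigma^2\lambda^2}{8NTP_{\mathrm s}\pi^2}\left(\frac{1}{\mathrm{var}(\tilde{\mathbf x})-\frac{\mathrm{cov}(\tilde{\mathbf x},\tilde{\mathbf y})^2}{\mathrm{var}(\tilde{\mathbf y})}}+\frac{1}{\mathrm{var}(\tilde{\mathbf y})-\frac{\mathrm{cov}(\tilde{\mathbf x},\tilde{\mathbf y})^2}{\mathrm{var}(\tilde{\mathbf x})}}\right)\overset{(b)}{\ge}\frac{K\sigma^2\lambda^2}{NTP_{\mathrm s}A^2\pi^2}.$$ In particular, the same two lower bounds hold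 for the sample average $\tilde\psi(\tilde{\mathbf q})=\frac1M\sum_{m=1}^M\mathrm{tr}(\mathrm{CRB}_m(\tilde{\mathbf q}))$ over any $M$ realizations of target angles and signals each satisfying these assumptions with the same $P_{\mathrm s}$. Equality at (a) holds if and only if both: (i) for all $k\ne k'$ and all $\iota,\iota'\in\{\mathrm u,\mathrm v\}$, $\Re\{[\mathbf R_{\mathbf S}^{\mathsf T}]_{k,k'}\dot{\mathbf a}_\iota(\tilde{\mathbf q},\mathbf r_k)^{\mathsf H}\boldsymbol\Pi_{\mathbf A}^\perp\dot{\mathbf a}_{\iota'}(\tilde{\mathbf q},\mathbf r_{k'})\}=0$; and (ii) for all $k$ and $(\iota,\iota')\in\{(\mathrm u,\mathrm v),(\mathrm v,\mathrm u)\}$, $\mathbf A^{\mathsf H}\boldsymbol\Pi_k^\perp\big(\dot{\mathbf a}_\iota(\tilde{\mathbf q},\mathbf r_k)-\zeta^*_{\iota,k}\dot{\mathbf a}_{\iota'}(\tilde{\mathbf q},\mathbf r_k)\big)=\mathbf 0_{K\times1}$. Equality at (b) holds if and only if $\mathrm{cov}(\tilde{\mathbf x},\tilde{\mathbf y})=0$, $\mathrm{var}(\tilde{\mathbf x})=\mathrm{var}(\tilde{\mathbf y})$, $\mu(\tilde{\mathbf x})=\mu(\tilde{\mathbf y})=0$, and $x_n^2+y_n^2=A^2/2$ for all $n=1,\dots,N$.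
   Context: Fix $N>K\ge1$, $T\ge1$, $\lambda>0$, $\sigma^2>0$. Antenna positions $\mathbf q_n=[x_n,y_n]^{\mathsf T}\in\mathbb R^2$ ($n=1,\dots,N$), $\tilde{\mathbf q}=\{\mathbf q_n\}$, $\tilde{\mathbf x}=[x_1,\dots,x_N]^{\mathsf T}$, $\tilde{\mathbf y}=[y_1,\dots,y_N]^{\mathsf T}$; target coordinates $\mathbf r_k=[u_k,v_k]^{\mathsf T}\in\mathbb R^2$. Steering vector $\mathbf a(\tilde{\mathbf q},\mathbf r)\in\mathbb C^N$ with $n$-th entry $e^{\mathrm j\frac{2\pi}{\lambda}\mathbf q_n^{\mathsf T}\mathbf r}$; $\mathbf A=[\mathbf a(\tilde{\mathbf q},\mathbf r_1),\dots,\mathbf a(\tilde{\mathbf q},\mathbf r_K)]$. $\dot{\mathbf a}_{\mathrm u}(\tilde{\mathbf q},\mathbf r_k)$ has $n$-th entry $\mathrm j\frac{2\pi}{\lambda}x_ne^{\mathrm j\frac{2\pi}{\lambda}\mathbf q_n^{\mathsf T}\mathbf r_k}$, $\dot{\mathbf a}_{\mathrm v}(\tilde{\mathbf q},\mathbf r_k)$ has $n$-th entry $\mathrm j\frac{2\pi}{\lambda}y_ne^{\mathrm j\frac{2\pi}{\lambda}\mathbf q_n^{\mathsf T}\mathbf r_k}$; $\dot{\mathbf A}=[\dot{\mathbf a}_{\mathrm u}(\tilde{\mathbf q},\mathbf r_1),\dots,\dot{\mathbf a}_{\mathrm u}(\tilde{\mathbf q},\mathbf r_K),\dot{\mathbf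 a}_{\mathrm v}(\tilde{\mathbf q},\mathbf r_1),\dots,\dot{\mathbf a}_{\mathrm v}(\tilde{\mathbf q},\mathbf r_K)]\in\mathbb C^{N\times2K}$. Signals $\mathbf S=[\mathbf s_1,\dots,\mathbf s_K]^{\mathsf T}\in\mathbb C^{K\times T}$, $\mathbf R_{\mathbf S}=\mathbf S\mathbf S^{\mathsf H}$. $\boldsymbol\Pi_{\mathbf A}^\perp=\mathbf I_N-\mathbf A(\mathbf A^{\mathsf H}\mathbf A)^{-1}\mathbf A^{\mathsf H}$; $\boldsymbol\Pi_k^\perp=\mathbf I_N-\mathbf a(\tilde{\mathbf q},\mathbf r_k)\mathbf a(\tilde{\mathbf q},\mathbf r_k)^{\mathsf H}/\|\mathbf a(\tilde{\mathbf q},\mathbf r_k)\|_2^2$. $\mathbf 1_2$ is the $2\times2$ all-ones matrix; $\otimes$ Kronecker, $\odot$ Hadamard product. $\zeta^*_{\mathrm u,k}=\frac{\Re\{\dot{\mathbf a}_{\mathrm u}^{\mathsf H}\boldsymbol\Pi_k^\perp\dot{\mathbf a}_{\mathrm v}\}}{\|\boldsymbol\Pi_k^\perp\dot{\mathbf a}_{\mathrm v}\|_2^2}$, $\zeta^*_{\mathrm v,k}=\frac{\Re\{\dot{\mathbf a}_{\mathrm u}^{\mathsf H}\boldsymbol\Pi_k^\perp\dot{\mathbf a}_{\mathrm v}\}}{\|\boldsymbol\Pi_k^\perp\dot{\mathbf a}_{\mathrm u}\|_2^2}$ (vectors evaluated at $(\tilde{\mathbf q},\mathbf r_k)$). $\mu(\tilde{\mathbf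 x})=\frac1N\sum_nx_n$, $\mathrm{var}(\tilde{\mathbf x})=\frac1N\sum_n(x_n-\mu(\tilde{\mathbf x}))^2$ (same for $\tilde{\mathbf y}$), $\mathrm{cov}(\tilde{\mathbf x},\tilde{\mathbf y})=\frac1N\sum_n(x_n-\mu(\tilde{\mathbf x}))(y_n-\mu(\tilde{\mathbf y}))$. $\mathrm{CRB}_m(\tilde{\mathbf q})$ denotes the matrix $\boldsymbol\Phi^{-1}$ computed with the target angles and signals of the $m$-th realization. *)

theory Defs
  imports "HOL-Analysis.Analysis"
begin

(* Index conventions:
   'n :: finite  -- antenna index (N = CARD('n))
   'k :: finite  -- target index  (K = CARD('k))
   't :: finite  -- snapshot index (T = CARD('t))
   The 2K columns of \<dot>A are indexed by 'k + 'k : Inl k is the u-derivative column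
   of target k, Inr k the v-derivative column (block order [u-block, v-block]). *)

datatype dir = U | V

definition cadj :: "complex^'m^'n \<Rightarrow> complex^'n^'m" where
  "cadj M = (\<chi> i j. cnj (M$j$i))"

definition cinner :: "complex^'n \<Rightarrow> complex^'n \<Rightarrow> complex" where
  "cinner a b = (\<Sum>n\<in>UNIV. cnj (a$n) * b$n)"

definition couter :: "complex^'n \<Rightarrow> complex^'n \<Rightarrow> complex^'n^'n" where
  "couter a b = (\<chi> i j. a$i * cnj (b$j))"

definition steer :: "real \<Rightarrow> real^'n \<Rightarrow> real^'n \<Rightarrow> real^'k \<Rightarrow> real^'k \<Rightarrow> 'k \<Rightarrow> complex^'n" where
  "steer lam x y u v k = (\<chi> n. exp (\<i> * complex_of_real (2 * pi / lam * (x$n * u$k + y$n * v$k))))"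

definition steer_mat :: "real \<Rightarrow> real^'n \<Rightarrow> real^'n \<Rightarrow> real^'k \<Rightarrow> real^'k \<Rightarrow> complex^'k^'n" where
  "steer_mat lam x y u v = (\<chi> n k. steer lam x y u v k $ n)"

definition adot :: "real \<Rightarrow> real^'n \<Rightarrow> real^'n \<Rightarrow> real^'k \<Rightarrow> real^'k \<Rightarrow> dir \<Rightarrow> 'k \<Rightarrow> complex^'n" where
  "adot lam x y u v d k = (\<chi> n. \<i> * complex_of_real (2 * pi / lam) *
      complex_of_real (case d of U \<Rightarrow> x$n | V \<Rightarrow> y$n) * steer lam x y u v k $ n)"

definition adot_mat :: "real \<Rightarrow> real^'n \<Rightarrow> real^'n \<Rightarrow> real^'k \<Rightarrow> real^'k \<Rightarrow> complex^('k + 'k)^'n" where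
  "adot_mat lam x y u v = (\<chi> n j. (case j of Inl k \<Rightarrow> adot lam x y u v U k $ n
                                          | Inr k \<Rightarrow> adot lam x y u v V k $ n))"

definition RS :: "complex^'t^'k \<Rightarrow> complex^'k^'k" where
  "RS S = S ** cadj S"

definition proj_perp :: "complex^'k^'n \<Rightarrow> complex^'n^'n" where
  "proj_perp A = mat 1 - A ** matrix_inv (cadj A ** A) ** cadj A"

definition proj_perp_vec :: "complex^'n \<Rightarrow> complex^'n^'n" where
  "proj_perp_vec a = mat 1 - (\<chi> i j. couter a a $ i $ j / complex_of_real ((norm a)\<^sup>2))"

definition blk :: "'k + 'k \<Rightarrow> 'k" where
  "blk j = (case j of Inl k \<Rightarrow> k | Inr k \<Rightarrow> k)"

definition kron_ones2 :: "'a^'k^'k \<Rightarrow> 'a^('k + 'k)^('k + 'k)" where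
  "kron_ones2 M = (\<chi> i j. M $ blk i $ blk j)"

definition hadamard :: "'a::times^'m^'n \<Rightarrow> 'a^'m^'n \<Rightarrow> 'a^'m^'n" where
  "hadamard P Q = (\<chi> i j. P$i$j * Q$i$j)"

definition Phi :: "real \<Rightarrow> real \<Rightarrow> real^'n \<Rightarrow> real^'n \<Rightarrow> real^'k \<Rightarrow> real^'k \<Rightarrow> complex^'t^'k
                   \<Rightarrow> real^('k + 'k)^('k + 'k)" where
  "Phi lam sigma2 x y u v S =
     (let Ad = adot_mat lam x y u v;
          H = hadamard (kron_ones2 (transpose (RS S)))
                       (cadj Ad ** proj_perp (steer_mat lam x y u v) ** Ad)
      in (\<chi> i j. 2 / sigma2 * Re (H $ i $ j)))"

definition CRB :: "real \<Rightarrow> real \<Rightarrow> real^'n \<Rightarrow> real^'n \<Rightarrow> real^'k \<Rightarrow> real^'k \<Rightarrow> complex^'t^'k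
                   \<Rightarrow> real^('k + 'k)^('k + 'k)" where
  "CRB lam sigma2 x y u v S = matrix_inv (Phi lam sigma2 x y u v S)"

definition pos_def :: "real^'m^'m \<Rightarrow> bool" where
  "pos_def M \<longleftrightarrow> transpose M = M \<and> (\<forall>z. z \<noteq> 0 \<longrightarrow> z \<bullet> (M *v z) > 0)"

definition full_col_rank :: "complex^'m^'n \<Rightarrow> bool" where
  "full_col_rank M \<longleftrightarrow> (\<forall>c. M *v c = 0 \<longrightarrow> c = 0)"

definition mean :: "real^'n \<Rightarrow> real" where
  "mean x = (\<Sum>n\<in>UNIV. x$n) / real CARD('n)"

definition cov :: "real^'n \<Rightarrow> real^'n \<Rightarrow> real" where
  "cov x y = (\<Sum>n\<in>UNIV. (x$n - mean x) * (y$n - mean y)) / real CARD('n)"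

definition var :: "real^'n \<Rightarrow> real" where
  "var x = (\<Sum>n\<in>UNIV. (x$n - mean x)\<^sup>2) / real CARD('n)"

definition sig_energy :: "complex^'t^'k \<Rightarrow> 'k \<Rightarrow> real" where
  "sig_energy S k = (\<Sum>t\<in>UNIV. (cmod (S$k$t))\<^sup>2)"

definition zeta :: "real \<Rightarrow> real^'n \<Rightarrow> real^'n \<Rightarrow> real^'k \<Rightarrow> real^'k \<Rightarrow> dir \<Rightarrow> 'k \<Rightarrow> real" where
  "zeta lam x y u v d k =
     (let P = proj_perp_vec (steer lam x y u v k);
          au = adot lam x y u v U k; av = adot lam x y u v V k
      in Re (cinner au (P *v av)) /
         (case d of U \<Rightarrow> (norm (P *v av))\<^sup>2 | V \<Rightarrow> (norm (P *v au))\<^sup>2))"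

definition realization_ok :: "real \<Rightarrow> real \<Rightarrow> real \<Rightarrow> real^'n \<Rightarrow> real^'n \<Rightarrow> real^'k \<Rightarrow> real^'k
                               \<Rightarrow> complex^'t^'k \<Rightarrow> bool" where
  "realization_ok lam sigma2 Ps x y u v S \<longleftrightarrow>
     full_col_rank (steer_mat lam x y u v) \<and>
     pos_def (Phi lam sigma2 x y u v S) \<and>
     (\<forall>k. sig_energy S k = real CARD('t) * Ps)"

end

theory Submission
  imports Defs
begin

lemma sum_UNIV_Plus:
  "sum f (UNIV::('a::finite + 'b::finite) set) = (\<Sum>k\<in>UNIV. f (Inl k)) + (\<Sum>k\<in>UNIV. f (Inr k))"
  using sum.Plus[of "UNIV::'a set" "UNIV::'b set" f] by (simp add: comp_def)

lemma cadj_mult: "cadj (A ** B) = cadj B ** cadj (A::complex^'m^'n)"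
proof -
  have "\<And>i j. cnj (\<Sum>k\<in>UNIV. A$j$k * B$k$i) = (\<Sum>k\<in>UNIV. cnj (B$k$i) * cnj (A$j$k))"
    by (simp add: mult.commute)
  then show ?thesis unfolding cadj_def matrix_matrix_mult_def by (simp add: vec_eq_iff)
qed
lemma cadj_cadj[simp]: "cadj (cadj A) = A"
  by (simp add: cadj_def vec_eq_iff)

lemma cinner_mv: "cinner (M *v u) v = cinner u (cadj M *v v)"
proof -
  have "cinner (M *v u) v = (\<Sum>i\<in>UNIV. \<Sum>j\<in>UNIV. cnj (M$i$j) * cnj (u$j) * v$i)"
    unfolding cinner_def matrix_vector_mult_def
    by (simp add: sum_distrib_right)
  also have "\<dots> = (\<Sum>j\<in>UNIV. \<Sum>i\<in>UNIV. cnj (M$i$j) * cnj (u$j) * v$i)"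
    by (rule sum.swap)
  also have "\<dots> = cinner u (cadj M *v v)"
    unfolding cinner_def matrix_vector_mult_def cadj_def
    by (simp add: sum_distrib_left mult_ac)
  finally show ?thesis .
qed

lemma cinner_mv2: "cinner u (M *v v) = cinner (cadj M *v u) v"
  using cinner_mv[of "cadj M" u v] by simp

lemma cinner_add_left: "cinner (a + b) c = cinner a c + cinner b c"
  by (simp add: cinner_def distrib_right sum.distrib)
lemma cinner_add_right: "cinner c (a + b) = cinner c a + cinner c b"
  by (simp add: cinner_def distrib_left sum.distrib)
lemma cinner_diff_left: "cinner (a - b) c = cinner a c - cinner b c"
  by (simp add: cinner_def left_diff_distrib sum_subtractf)
lemma cinner_diff_right: "cinner c (a - b) = cinner c a - cinner c b"
  by (simp add: cinner_def right_diff_distrib sum_subtractf)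
lemma cinner_scale_left: "cinner (s *s a) c = cnj s * cinner a c"
  by (simp add: cinner_def sum_distrib_left mult_ac)
lemma cinner_scale_right: "cinner c (s *s a) = s * cinner c a"
  by (simp add: cinner_def sum_distrib_left mult_ac)
lemma cinner_zero_right[simp]: "cinner c 0 = 0"
  by (simp add: cinner_def)
lemma cinner_zero_left[simp]: "cinner 0 c = 0"
  by (simp add: cinner_def)

lemma cnj_mult_self: "cnj z * z = complex_of_real ((cmod z)\<^sup>2)"
  using complex_norm_square[of z] by (simp only: mult.commute)

lemma cinner_self: "cinner v v = complex_of_real (\<Sum>i\<in>UNIV. (cmod (v$i))\<^sup>2)"
  unfolding cinner_def of_real_sum cnj_mult_self ..

lemma cinner_self_eq0: "cinner v v = 0 \<longleftrightarrow> v = 0"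
proof
  assume "cinner v v = 0"
  then have "(\<Sum>i\<in>UNIV. (cmod (v$i))\<^sup>2) = 0" unfolding cinner_self of_real_eq_0_iff .
  then have "\<forall>i\<in>UNIV. (cmod (v$i))\<^sup>2 = 0" using sum_nonneg_eq_0_iff[of UNIV "\<lambda>i. (cmod (v$i))\<^sup>2"] by simp
  then show "v = 0" by (simp add: vec_eq_iff)
qed simp

lemma norm_sq_vec: "(norm (v::complex^'n))\<^sup>2 = (\<Sum>i\<in>UNIV. (cmod (v$i))\<^sup>2)"
  unfolding norm_vec_def L2_set_def by (simp add: sum_nonneg)

lemma Re_cinner_self: "Re (cinner v v) = (norm v)\<^sup>2"
  by (simp add: cinner_self norm_sq_vec)

lemma gram_invertible:
  fixes A :: "complex^'k^'n"
  assumes "full_col_rank A"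
  shows "invertible (cadj A ** A)"
proof -
  have "\<forall>c. (cadj A ** A) *v c = 0 \<longrightarrow> c = 0"
  proof (intro allI impI)
    fix c assume "(cadj A ** A) *v c = 0"
    then have "cinner c ((cadj A ** A) *v c) = 0" by simp
    then have "cinner (A *v c) (A *v c) = 0"
      by (simp add: cinner_mv2 matrix_vector_mul_assoc[symmetric])
    then show "c = 0" using assms by (simp add: cinner_self_eq0 full_col_rank_def)
  qed
  then have "\<exists>B. B ** (cadj A ** A) = mat 1"
    by (subst matrix_left_invertible_ker)
  then show ?thesis
    by (subst invertible_left_inverse)
qed

lemma matrix_inv_both:
  assumes "invertible M"
  shows "M ** matrix_inv M = mat 1" "matrix_inv M ** M = mat 1"
  using assms someI_ex[of "\<lambda>A'. M ** A' = mat 1 \<and> A' ** M = mat 1"]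
  unfolding invertible_def matrix_inv_def by auto


lemma proj_perp_apply:
  "proj_perp Am *v w = w - Am *v (matrix_inv (cadj Am ** Am) *v (cadj Am *v w))"
  unfolding proj_perp_def
  by (simp add: matrix_vector_mult_diff_rdistrib matrix_vector_mul_assoc matrix_mul_assoc)

context
  fixes Am :: "complex^'k^'n"
  assumes fr: "full_col_rank Am"
begin

lemma Ginv: "(cadj Am ** Am) ** matrix_inv (cadj Am ** Am) = mat 1"
            "matrix_inv (cadj Am ** Am) ** (cadj Am ** Am) = mat 1"
  using matrix_inv_both[OF gram_invertible[OF fr]] by auto

lemma PiH: "cadj Am *v (proj_perp Am *v w) = 0"
proof -
  have "cadj Am *v (Am *v (matrix_inv (cadj Am ** Am) *v (cadj Am *v w)))
      = ((cadj Am ** Am) ** matrix_inv (cadj Am ** Am)) *v (cadj Am *v w)"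
    by (simp add: matrix_vector_mul_assoc matrix_mul_assoc)
  also have "\<dots> = cadj Am *v w" by (simp add: Ginv)
  finally show ?thesis
    by (simp add: proj_perp_apply matrix_vector_mult_diff_distrib)
qed

lemma PiA: "proj_perp Am *v (Am *v c) = 0"
proof -
  have "matrix_inv (cadj Am ** Am) *v (cadj Am *v (Am *v c)) = c"
    by (simp add: matrix_vector_mul_assoc Ginv)
  then show ?thesis by (simp add: proj_perp_apply)
qed

lemma Pi_orth: "cinner (Am *v c) (proj_perp Am *v w) = 0"
  by (simp add: cinner_mv PiH)

lemma Pi_quad:
  assumes "w = b + Am *v c"
  defines "y \<equiv> matrix_inv (cadj Am ** Am) *v (cadj Am *v b)"
  shows "proj_perp Am *v w = b - Am *v y"
    and "Re (cinner w (proj_perp Am *v w)) = (norm b)\<^sup>2 - (norm (Am *v y))\<^sup>2"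
    and "Am *v y = 0 \<longleftrightarrow> cadj Am *v b = 0"
proof -
  have Pw: "proj_perp Am *v w = proj_perp Am *v b"
    using assms(1) by (simp add: matrix_vector_right_distrib PiA)
  then show 1: "proj_perp Am *v w = b - Am *v y"
    by (simp add: proj_perp_apply y_def)
  have Gy: "(cadj Am ** Am) *v y = cadj Am *v b"
    by (simp add: y_def matrix_vector_mul_assoc matrix_mul_assoc Ginv)
  have "cinner w (proj_perp Am *v w) = cinner b (proj_perp Am *v w)"
    using assms(1) by (simp add: cinner_add_left Pi_orth)
  also have "\<dots> = cinner b b - cinner b (Am *v y)"
    by (simp add: 1 cinner_diff_right)
  also have "cinner b (Am *v y) = cinner (cadj Am *v b) y"
    by (rule cinner_mv2)
  also have "\<dots> = cinner ((cadj Am ** Am) *v y) y" by (simp add: Gy)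
  also have "\<dots> = cinner (Am *v y) (Am *v y)"
    by (simp add: cinner_mv matrix_vector_mul_assoc[symmetric])
  finally show "Re (cinner w (proj_perp Am *v w)) = (norm b)\<^sup>2 - (norm (Am *v y))\<^sup>2"
    by (simp add: Re_cinner_self)
  have "Am *v y = 0 \<longleftrightarrow> y = 0" using fr unfolding full_col_rank_def by auto
  also have "y = 0 \<longleftrightarrow> cadj Am *v b = 0"
  proof
    assume "y = 0" then show "cadj Am *v b = 0" using Gy by simp
  qed (simp add: y_def)
  finally show "Am *v y = 0 \<longleftrightarrow> cadj Am *v b = 0" .
qed

end

definition cc :: "real \<Rightarrow> complex" where
  "cc lam = \<i> * complex_of_real (2 * pi / lam)"

lemma cc_sq: "cnj (cc lam) * cc lam = complex_of_real ((2 * pi / lam)\<^sup>2)"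
  unfolding cc_def by (simp add: complex_eq_iff power2_eq_square)

definition pv :: "real \<Rightarrow> real^'n \<Rightarrow> real^'n \<Rightarrow> real^'k \<Rightarrow> real^'k \<Rightarrow> ('n \<Rightarrow> real) \<Rightarrow> 'k \<Rightarrow> complex^'n" where
  "pv lam x y u v f k = (\<chi> n. cc lam * complex_of_real (f n) * steer lam x y u v k $ n)"

definition dsel :: "real^'n \<Rightarrow> real^'n \<Rightarrow> dir \<Rightarrow> 'n \<Rightarrow> real" where
  "dsel x y d n = (case d of U \<Rightarrow> x$n | V \<Rightarrow> y$n)"

definition ctr :: "('n::finite \<Rightarrow> real) \<Rightarrow> 'n \<Rightarrow> real" where
  "ctr f n = f n - (\<Sum>m\<in>UNIV. f m) / real CARD('n)"

lemma steer_unit: "cnj (steer lam x y u v k $ n) * steer lam x y u v k $ n = 1"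
proof -
  have "cmod (steer lam x y u v k $ n) = 1"
    unfolding steer_def by (simp add: norm_exp_i_times)
  then show ?thesis by (simp add: cnj_mult_self)
qed

lemma norm_steer: "(norm (steer lam (x::real^'n) y u v k))\<^sup>2 = real CARD('n)"
proof -
  have "\<And>n. cmod (steer lam x y u v k $ n) = 1"
    unfolding steer_def by (simp add: norm_exp_i_times)
  then show ?thesis by (simp add: norm_sq_vec)
qed

lemma adot_pv: "adot lam x y u v d k = pv lam x y u v (dsel x y d) k"
  unfolding adot_def pv_def dsel_def cc_def by simp

lemma pv_comb:
  "complex_of_real p *s pv lam x y u v f k + complex_of_real q *s pv lam x y u v g k
   = pv lam x y u v (\<lambda>n. p * f n + q * g n) k"
  unfolding pv_def by (simp add: vec_eq_iff algebra_simps)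

lemma pv_scale:
  "complex_of_real p *s pv lam x y u v f k = pv lam x y u v (\<lambda>n. p * f n) k"
  unfolding pv_def by (simp add: vec_eq_iff algebra_simps)

lemma pv_diff:
  "pv lam x y u v f k - complex_of_real q *s pv lam x y u v g k
   = pv lam x y u v (\<lambda>n. f n - q * g n) k"
  unfolding pv_def by (simp add: vec_eq_iff algebra_simps)

lemma cinner_pv:
  "cinner (pv lam x y u v f k) (pv lam x y u v g k)
   = complex_of_real ((2 * pi / lam)\<^sup>2 * (\<Sum>n\<in>UNIV. f n * g n))"
proof -
  have pt: "\<And>n. cnj (pv lam x y u v f k $ n) * pv lam x y u v g k $ n
     = complex_of_real ((2 * pi / lam)\<^sup>2 * (f n * g n))"
  proof -
    fix n
    let ?s = "steer lam x y u v k $ n"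
    have "cnj (pv lam x y u v f k $ n) * pv lam x y u v g k $ n
       = (cnj (cc lam) * cc lam) * complex_of_real (f n * g n) * (cnj ?s * ?s)"
      unfolding pv_def by (simp add: mult_ac)
    then show "?thesis n" by (simp add: steer_unit cc_sq)
  qed
  have "cinner (pv lam x y u v f k) (pv lam x y u v g k)
      = (\<Sum>n\<in>UNIV. complex_of_real ((2 * pi / lam)\<^sup>2 * (f n * g n)))"
    unfolding cinner_def pt ..
  also have "\<dots> = complex_of_real (\<Sum>n\<in>UNIV. (2 * pi / lam)\<^sup>2 * (f n * g n))"
    by (simp only: of_real_sum)
  finally show ?thesis by (simp add: sum_distrib_left)
qed

lemma norm_pv: "(norm (pv lam x y u v f k))\<^sup>2 = (2 * pi / lam)\<^sup>2 * (\<Sum>n\<in>UNIV. (f n)\<^sup>2)"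
  using cinner_pv[of lam x y u v f k f] Re_cinner_self[of "pv lam x y u v f k"]
  by (simp add: power2_eq_square)

lemma cinner_steer_pv:
  "cinner (steer lam x y u v k) (pv lam x y u v f k)
   = cc lam * complex_of_real (\<Sum>n\<in>UNIV. f n)"
proof -
  have pt: "\<And>n. cnj (steer lam x y u v k $ n) * pv lam x y u v f k $ n
     = cc lam * complex_of_real (f n)"
  proof -
    fix n
    let ?s = "steer lam x y u v k $ n"
    have "cnj ?s * pv lam x y u v f k $ n
       = cc lam * complex_of_real (f n) * (cnj ?s * ?s)"
      unfolding pv_def by (simp add: mult_ac)
    then show "?thesis n" by (simp add: steer_unit)
  qed
  have "cinner (steer lam x y u v k) (pv lam x y u v f k) = (\<Sum>n\<in>UNIV. cc lam * complex_of_real (f n))"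
    unfolding cinner_def pt ..
  also have "\<dots> = cc lam * complex_of_real (\<Sum>n\<in>UNIV. f n)"
    by (simp only: of_real_sum sum_distrib_left)
  finally show ?thesis .
qed

lemma proj_perp_vec_apply:
  "proj_perp_vec a *v w = w - (cinner a w / complex_of_real ((norm a)\<^sup>2)) *s a"
proof -
  let ?X = "(\<chi> i j. couter a a $ i $ j / complex_of_real ((norm a)\<^sup>2))"
  have "?X *v w = (cinner a w / complex_of_real ((norm a)\<^sup>2)) *s a"
  proof -
    have "\<And>i. (\<Sum>j\<in>UNIV. a$i * cnj (a$j) / complex_of_real ((norm a)\<^sup>2) * w$j)
        = (\<Sum>j\<in>UNIV. cnj (a$j) * w$j) / complex_of_real ((norm a)\<^sup>2) * a$i"
      by (simp add: sum_divide_distrib sum_distrib_right sum_distrib_left mult_ac)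
    then show ?thesis
      unfolding couter_def cinner_def matrix_vector_mult_def by (simp add: vec_eq_iff)
  qed
  then show ?thesis
    unfolding proj_perp_vec_def by (simp add: matrix_vector_mult_diff_rdistrib)
qed

lemma proj_pv:
  fixes x :: "real^'n::finite"
  shows "proj_perp_vec (steer lam x y u v k) *v pv lam x y u v f k = pv lam x y u v (ctr f) k"
proof -
  have N: "real CARD('n) \<noteq> 0" by (simp add: card_gt_0_iff)
  have "\<And>n. cc lam * complex_of_real (f n) * steer lam x y u v k $ n -
      cc lam * complex_of_real (sum f UNIV) / complex_of_real (real CARD('n)) * steer lam x y u v k $ n
    = cc lam * complex_of_real (f n - sum f UNIV / real CARD('n)) * steer lam x y u v k $ n"
    by (simp add: algebra_simps diff_divide_distrib)
  then show ?thesis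
    unfolding proj_perp_vec_apply cinner_steer_pv norm_steer
    unfolding pv_def ctr_def using N
    by (simp add: vec_eq_iff)
qed


lemma mv_axis: "((M::'a::comm_ring_1^'m^'n) *v axis j c) $ i = M$i$j * c"
  unfolding matrix_vector_mult_def axis_def
  by (simp add: if_distrib[of "\<lambda>z. _ * z"] cong: if_cong)

lemma pd_sym: "pos_def M \<Longrightarrow> z \<bullet> (M *v x) = x \<bullet> (M *v (z::real^'m))"
proof -
  assume "pos_def M"
  then have T: "transpose M = M" by (simp add: pos_def_def)
  have "z \<bullet> (M *v x) = (z v* M) \<bullet> x" by (simp add: dot_lmul_matrix)
  also have "z v* M = transpose M *v z" by simp
  finally show ?thesis using T by (simp add: inner_commute)
qed

lemma pd_invertible:
  fixes M :: "real^'m^'m"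
  assumes "pos_def M" shows "invertible M"
proof -
  have "\<forall>c. M *v c = 0 \<longrightarrow> c = 0"
  proof (intro allI impI)
    fix c assume "M *v c = 0"
    then have "c \<bullet> (M *v c) = 0" by simp
    then show "c = 0" using assms unfolding pos_def_def by force
  qed
  then have "\<exists>B. B ** M = mat 1" by (subst matrix_left_invertible_ker)
  then show ?thesis by (subst invertible_left_inverse)
qed

lemma pd_var:
  fixes M :: "real^'m^'m"
  assumes pd: "pos_def M"
  defines "X \<equiv> matrix_inv M"
  shows "b \<bullet> (X *v b) - (2 * (z \<bullet> b) - z \<bullet> (M *v z)) \<ge> 0"
    and "b \<bullet> (X *v b) - (2 * (z \<bullet> b) - z \<bullet> (M *v z)) = 0 \<longleftrightarrow> M *v z = b"
proof -
  have inv: "M ** X = mat 1" "X ** M = mat 1"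
    using matrix_inv_both[OF pd_invertible[OF pd]] by (auto simp: X_def)
  define x where "x = X *v b"
  have Mx: "M *v x = b" by (simp add: x_def matrix_vector_mul_assoc inv)
  define d where "d = z - x"
  have eq: "b \<bullet> (X *v b) - (2 * (z \<bullet> b) - z \<bullet> (M *v z)) = d \<bullet> (M *v d)"
  proof -
    have "d \<bullet> (M *v d) = z \<bullet> (M *v z) - z \<bullet> (M *v x) - x \<bullet> (M *v z) + x \<bullet> (M *v x)"
      by (simp add: d_def matrix_vector_mult_diff_distrib inner_diff_left inner_diff_right)
    also have "x \<bullet> (M *v z) = z \<bullet> (M *v x)" using pd_sym[OF pd] by simp
    finally show ?thesis using Mx by (simp add: x_def inner_commute)
  qed
  show "b \<bullet> (X *v b) - (2 * (z \<bullet> b) - z \<bullet> (M *v z)) \<ge> 0"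
    unfolding eq using pd unfolding pos_def_def
    by (cases "d = 0") (auto intro: less_imp_le)
  have "d \<bullet> (M *v d) = 0 \<longleftrightarrow> d = 0"
    using pd unfolding pos_def_def by (auto simp del: inner_zero_left)
  also have "d = 0 \<longleftrightarrow> M *v z = b"
  proof
    assume "d = 0" then show "M *v z = b" using Mx by (simp add: d_def)
  next
    assume "M *v z = b"
    then have "X *v (M *v z) = x" by (simp add: x_def)
    then show "d = 0" by (simp add: d_def matrix_vector_mul_assoc inv)
  qed
  finally show "b \<bullet> (X *v b) - (2 * (z \<bullet> b) - z \<bullet> (M *v z)) = 0 \<longleftrightarrow> M *v z = b"
    unfolding eq .
qed

lemma trace_axis: "trace (X::real^'m^'m) = (\<Sum>i\<in>UNIV. axis i 1 \<bullet> (X *v axis i 1))"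
  unfolding trace_def by (simp add: inner_axis' mv_axis)

lemma elim2_real:
  fixes a b p q p' q' :: real
  assumes "p * q' - q * p' \<noteq> 0"
  shows "(p * a + q * b = 0 \<and> p' * a + q' * b = 0) \<longleftrightarrow> (a = 0 \<and> b = 0)"
proof
  assume h: "p * a + q * b = 0 \<and> p' * a + q' * b = 0"
  then have h1: "p * a + q * b = 0" and h2: "p' * a + q' * b = 0" by auto
  have e1: "(p * q' - q * p') * a = q' * (p * a + q * b) - q * (p' * a + q' * b)"
    by (simp add: algebra_simps)
  have e2: "(p * q' - q * p') * b = p * (p' * a + q' * b) - p' * (p * a + q * b)"
    by (simp add: algebra_simps)
  have "(p * q' - q * p') * a = 0" unfolding e1 h1 h2 by simp
  moreover have "(p * q' - q * p') * b = 0" unfolding e2 h1 h2 by simp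
  ultimately show "a = 0 \<and> b = 0" using assms by simp
qed simp

lemma elim2_vec:
  fixes a b :: "complex^'k" and p q p' q' :: real
  assumes "p * q' - q * p' \<noteq> 0"
  shows "(complex_of_real p *s a + complex_of_real q *s b = 0 \<and>
          complex_of_real p' *s a + complex_of_real q' *s b = 0) \<longleftrightarrow> (a = 0 \<and> b = 0)"
proof
  assume h: "complex_of_real p *s a + complex_of_real q *s b = 0 \<and>
          complex_of_real p' *s a + complex_of_real q' *s b = 0"
  let ?d = "complex_of_real (p * q' - q * p')"
  have d0: "?d \<noteq> 0" using assms by (simp only: of_real_eq_0_iff not_False_eq_True)
  have "?d *s a = complex_of_real q' *s (complex_of_real p *s a + complex_of_real q *s b)
               - complex_of_real q *s (complex_of_real p' *s a + complex_of_real q' *s b)"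
    by (simp add: vec_eq_iff algebra_simps)
  moreover have "?d *s b = complex_of_real p *s (complex_of_real p' *s a + complex_of_real q' *s b)
               - complex_of_real p' *s (complex_of_real p *s a + complex_of_real q *s b)"
    by (simp add: vec_eq_iff algebra_simps)
  ultimately have "?d *s a = 0" "?d *s b = 0" using h by auto
  then show "a = 0 \<and> b = 0" using d0 by (auto simp: vec_eq_iff)
qed simp


definition ddir :: "'k + 'k \<Rightarrow> dir" where
  "ddir i = (case i of Inl _ \<Rightarrow> U | Inr _ \<Rightarrow> V)"

definition dcol :: "real \<Rightarrow> real^'n \<Rightarrow> real^'n \<Rightarrow> real^'k \<Rightarrow> real^'k \<Rightarrow> 'k + 'k \<Rightarrow> complex^'n" where
  "dcol lam x y u v i = adot lam x y u v (ddir i) (blk i)"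

lemma cadj_M_entry:
  "(cadj X ** M ** X) $ i $ j = cinner (\<chi> n. X$n$i) (M *v (\<chi> n. X$n$j))"
proof -
  have "(cadj X ** M ** X) $ i $ j = (\<Sum>l\<in>UNIV. \<Sum>m\<in>UNIV. cnj (X$m$i) * M$m$l * X$l$j)"
    unfolding cadj_def matrix_matrix_mult_def by (simp add: sum_distrib_right)
  also have "\<dots> = (\<Sum>m\<in>UNIV. \<Sum>l\<in>UNIV. cnj (X$m$i) * M$m$l * X$l$j)"
    by (rule sum.swap)
  also have "\<dots> = cinner (\<chi> n. X$n$i) (M *v (\<chi> n. X$n$j))"
    unfolding cinner_def matrix_vector_mult_def by (simp add: sum_distrib_left mult_ac)
  finally show ?thesis .
qed

lemma adot_mat_col: "(\<chi> n. adot_mat lam x y u v $ n $ j) = dcol lam x y u v j"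
  unfolding adot_mat_def dcol_def ddir_def blk_def by (cases j) (simp_all add: vec_eq_iff)

lemma Phi_entry:
  "Phi lam sigma2 x y u v S $ i $ j = 2 / sigma2 * Re (RS S $ blk j $ blk i *
     cinner (dcol lam x y u v i) (proj_perp (steer_mat lam x y u v) *v dcol lam x y u v j))"
  unfolding Phi_def Let_def hadamard_def kron_ones2_def
  by (simp add: cadj_M_entry adot_mat_col transpose_def)

lemma RS_diag: "RS S $ k $ k = complex_of_real (sig_energy S k)"
proof -
  have pt: "\<And>t. S$k$t * cnj (S$k$t) = complex_of_real ((cmod (S$k$t))\<^sup>2)"
    by (subst mult.commute) (rule cnj_mult_self)
  have "RS S $ k $ k = (\<Sum>t\<in>UNIV. S$k$t * cnj (S$k$t))"
    unfolding RS_def cadj_def matrix_matrix_mult_def by simp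
  also have "\<dots> = complex_of_real (sig_energy S k)"
    unfolding pt sig_energy_def by (simp only: of_real_sum)
  finally show ?thesis .
qed

lemma sum_ctr0: "(\<Sum>n\<in>UNIV. (x::real^'n::finite)$n - mean x) = 0"
  unfolding mean_def by (simp add: sum_subtractf card_gt_0_iff)

lemma stat_sums:
  fixes x y :: "real^'n::finite"
  defines "NN \<equiv> real CARD('n)"
  shows "(\<Sum>n\<in>UNIV. (p * (x$n - mean x) + q * (y$n - mean y))\<^sup>2)
          = NN * (p\<^sup>2 * var x + 2 * p * q * cov x y + q\<^sup>2 * var y)"
    and "(\<Sum>n\<in>UNIV. x$n * (p * (x$n - mean x) + q * (y$n - mean y)))
          = NN * (p * var x + q * cov x y)"
    and "(\<Sum>n\<in>UNIV. y$n * (p * (x$n - mean x) + q * (y$n - mean y)))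
          = NN * (p * cov x y + q * var y)"
proof -
  have N: "NN \<noteq> 0" by (simp add: NN_def card_gt_0_iff)
  have vx: "(\<Sum>n\<in>UNIV. (x$n - mean x)\<^sup>2) = NN * var x" using N by (simp add: var_def NN_def)
  have vy: "(\<Sum>n\<in>UNIV. (y$n - mean y)\<^sup>2) = NN * var y" using N by (simp add: var_def NN_def)
  have cv: "(\<Sum>n\<in>UNIV. (x$n - mean x) * (y$n - mean y)) = NN * cov x y" using N by (simp add: cov_def NN_def)
  have cx: "(\<Sum>n\<in>UNIV. (x$n - mean x)) = 0" by (rule sum_ctr0)
  have cy: "(\<Sum>n\<in>UNIV. (y$n - mean y)) = 0" by (rule sum_ctr0)
  have pt: "\<And>n. (p * (x$n - mean x) + q * (y$n - mean y))\<^sup>2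
     = p\<^sup>2 * (x$n - mean x)\<^sup>2 + 2 * p * q * ((x$n - mean x) * (y$n - mean y)) + q\<^sup>2 * (y$n - mean y)\<^sup>2"
    by (simp add: power2_eq_square algebra_simps)
  have A: "(\<Sum>n\<in>UNIV. (p * (x$n - mean x) + q * (y$n - mean y))\<^sup>2)
      = p\<^sup>2 * (\<Sum>n\<in>UNIV. (x$n - mean x)\<^sup>2) + 2 * p * q * (\<Sum>n\<in>UNIV. (x$n - mean x) * (y$n - mean y))
        + q\<^sup>2 * (\<Sum>n\<in>UNIV. (y$n - mean y)\<^sup>2)"
    unfolding pt by (simp add: sum.distrib sum_distrib_left)
  show "(\<Sum>n\<in>UNIV. (p * (x$n - mean x) + q * (y$n - mean y))\<^sup>2)
          = NN * (p\<^sup>2 * var x + 2 * p * q * cov x y + q\<^sup>2 * var y)"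
    unfolding A vx vy cv by (simp add: algebra_simps)
  have ptx: "\<And>n. x$n * (p * (x$n - mean x) + q * (y$n - mean y))
     = p * (x$n - mean x)\<^sup>2 + q * ((x$n - mean x) * (y$n - mean y))
       + mean x * p * (x$n - mean x) + mean x * q * (y$n - mean y)"
    by (simp add: power2_eq_square algebra_simps)
  have B: "(\<Sum>n\<in>UNIV. x$n * (p * (x$n - mean x) + q * (y$n - mean y)))
     = p * (\<Sum>n\<in>UNIV. (x$n - mean x)\<^sup>2) + q * (\<Sum>n\<in>UNIV. (x$n - mean x) * (y$n - mean y))
      + mean x * p * (\<Sum>n\<in>UNIV. (x$n - mean x)) + mean x * q * (\<Sum>n\<in>UNIV. (y$n - mean y))"
    unfolding ptx by (simp add: sum.distrib sum_distrib_left)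
  show "(\<Sum>n\<in>UNIV. x$n * (p * (x$n - mean x) + q * (y$n - mean y)))
          = NN * (p * var x + q * cov x y)"
    unfolding B vx cv cx cy by (simp add: algebra_simps)
  have pty: "\<And>n. y$n * (p * (x$n - mean x) + q * (y$n - mean y))
     = p * ((x$n - mean x) * (y$n - mean y)) + q * (y$n - mean y)\<^sup>2
       + mean y * p * (x$n - mean x) + mean y * q * (y$n - mean y)"
    by (simp add: power2_eq_square algebra_simps)
  have C: "(\<Sum>n\<in>UNIV. y$n * (p * (x$n - mean x) + q * (y$n - mean y)))
     = p * (\<Sum>n\<in>UNIV. (x$n - mean x) * (y$n - mean y)) + q * (\<Sum>n\<in>UNIV. (y$n - mean y)\<^sup>2)
      + mean y * p * (\<Sum>n\<in>UNIV. (x$n - mean x)) + mean y * q * (\<Sum>n\<in>UNIV. (y$n - mean y))"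
    unfolding pty by (simp add: sum.distrib sum_distrib_left)
  show "(\<Sum>n\<in>UNIV. y$n * (p * (x$n - mean x) + q * (y$n - mean y)))
          = NN * (p * cov x y + q * var y)"
    unfolding C vy cv cx cy by (simp add: algebra_simps)
qed

lemma ctr_lin:
  fixes x y :: "real^'n::finite"
  shows "ctr (\<lambda>n. p * x$n + q * y$n) = (\<lambda>n. p * (x$n - mean x) + q * (y$n - mean y))"
  unfolding ctr_def mean_def
  by (auto simp: sum.distrib sum_distrib_left[symmetric] algebra_simps add_divide_distrib)


definition zv :: "'k::finite \<Rightarrow> real \<Rightarrow> real \<Rightarrow> real^('k + 'k)" where
  "zv k p q = (\<chi> j. if j = Inl k then p else if j = Inr k then q else 0)"

lemma mv_zv: "((M::real^('k::finite + 'k)^'m) *v zv k p q) $ j = M$j$(Inl k) * p + M$j$(Inr k) * q"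
  unfolding matrix_vector_mult_def zv_def
  by (simp add: sum_UNIV_Plus if_distrib[of "\<lambda>z. _ * z"] cong: if_cong)

lemma inner_zv: "zv k p q \<bullet> (w::real^('k::finite + 'k)) = p * w $ Inl k + q * w $ Inr k"
  unfolding inner_vec_def zv_def
  by (simp add: sum_UNIV_Plus if_distrib[of "\<lambda>z. z * _"] cong: if_cong)

lemma dsel_U: "dsel x y U = (\<lambda>n. x$n)" and dsel_V: "dsel x y V = (\<lambda>n. y$n)"
  by (auto simp: dsel_def)

lemma dcol_Inl: "dcol lam x y u v (Inl k) = pv lam x y u v (\<lambda>n. x$n) k"
  and dcol_Inr: "dcol lam x y u v (Inr k) = pv lam x y u v (\<lambda>n. y$n) k"
  by (simp_all add: dcol_def ddir_def blk_def adot_pv dsel_U dsel_V)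

lemma steer_mat_axis: "steer_mat lam x y u v *v axis k s = s *s steer lam x y u v k"
  by (simp add: vec_eq_iff mv_axis steer_mat_def mult.commute)

lemma alg_bnd:
  fixes K s l N T P X Y C D :: real
  assumes pos: "s > 0" "l > 0" "N > 0" "T > 0" "P > 0" "X > 0" "Y > 0" "D > 0"
    and hD: "X * Y - C\<^sup>2 = D"
  shows "K * s * l\<^sup>2 / (8 * N * T * P * pi\<^sup>2) * (1 / (X - C\<^sup>2 / Y) + 1 / (Y - C\<^sup>2 / X))
       = K * ((1 / ((2 * (T * P) / s) * (2 * pi / l)\<^sup>2 * N)) * Y / D
            + (1 / ((2 * (T * P) / s) * (2 * pi / l)\<^sup>2 * N)) * X / D)"
proof -
  have 1: "1 / (X - C\<^sup>2 / Y) = Y / D"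
    using pos hD by (simp add: field_simps)
  have 2: "1 / (Y - C\<^sup>2 / X) = X / D"
    using pos hD by (simp add: field_simps)
  have 3: "1 / ((2 * (T * P) / s) * (2 * pi / l)\<^sup>2 * N) = s * l\<^sup>2 / (8 * N * T * P * pi\<^sup>2)"
    using pos by (simp add: field_simps power2_eq_square)
  show ?thesis unfolding 1 2 3 using pos by (simp add: field_simps)
qed


lemma alg_e:
  fixes a X Y C D :: real
  assumes a: "a \<noteq> 0" and D: "D \<noteq> 0" and hD: "X * Y - C\<^sup>2 = D"
  shows "(1/a)*((a*Y/D)*X + (-(a*C/D))*C) = 1"
    and "(1/a)*((a*Y/D)*C + (-(a*C/D))*Y) = 0"
    and "(1/a)*((-(a*C/D))*X + (a*X/D)*C) = 0"
    and "(1/a)*((-(a*C/D))*C + (a*X/D)*Y) = 1"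
proof -
  have "(1/a)*((a*Y/D)*X + (-(a*C/D))*C) = (X * Y - C\<^sup>2) / D"
    using a D by (simp add: field_simps power2_eq_square)
  then show "(1/a)*((a*Y/D)*X + (-(a*C/D))*C) = 1" using hD D by simp
  show "(1/a)*((a*Y/D)*C + (-(a*C/D))*Y) = 0"
    using a D by (simp add: field_simps)
  show "(1/a)*((-(a*C/D))*X + (a*X/D)*C) = 0"
    using a D by (simp add: field_simps)
  have "(1/a)*((-(a*C/D))*C + (a*X/D)*Y) = (X * Y - C\<^sup>2) / D"
    using a D by (simp add: field_simps power2_eq_square)
  then show "(1/a)*((-(a*C/D))*C + (a*X/D)*Y) = 1" using hD D by simp
qed

lemma elim2_real':
  fixes a b p q p' q' :: real
  assumes "p * q' - q * p' \<noteq> 0"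
  shows "(a * p + b * q = 0 \<and> a * p' + b * q' = 0) \<longleftrightarrow> (a = 0 \<and> b = 0)"
proof -
  have "(a * p + b * q = 0 \<and> a * p' + b * q' = 0) \<longleftrightarrow> (p * a + q * b = 0 \<and> p' * a + q' * b = 0)"
    using mult.commute[of a p] mult.commute[of b q] mult.commute[of a p'] mult.commute[of b q'] by linarith
  then show ?thesis using elim2_real[OF assms, of a b] by blast
qed

lemma all_sum_iff: "(\<forall>i. P i) \<longleftrightarrow> (\<forall>k. P (Inl k)) \<and> (\<forall>k. P (Inr k))"
  by (metis sumE)

definition mk :: "dir \<Rightarrow> 'k \<Rightarrow> 'k + 'k" where
  "mk d k = (case d of U \<Rightarrow> Inl k | V \<Rightarrow> Inr k)"

lemma blk_mk[simp]: "blk (mk d k) = k" and ddir_mk[simp]: "ddir (mk d k) = d"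
  by (cases d; simp add: mk_def blk_def ddir_def)+

lemma alg_t: "(a::real) \<noteq> 0 \<Longrightarrow> D \<noteq> 0 \<Longrightarrow> 2 * (a * Y / D) - (1 / a) * (a\<^sup>2 * Y / D) = a * Y / D"
  by (simp add: field_simps power2_eq_square)

lemma alg_quad:
  fixes a X Y C D p q :: real
  assumes D: "D \<noteq> 0" and hD: "X * Y - C\<^sup>2 = D"
  shows "(a*Y/D)\<^sup>2*X + 2*(a*Y/D)*(-(a*C/D))*C + (-(a*C/D))\<^sup>2*Y = a\<^sup>2 * Y / D"
    and "(-(a*C/D))\<^sup>2*X + 2*(-(a*C/D))*(a*X/D)*C + (a*X/D)\<^sup>2*Y = a\<^sup>2 * X / D"
    and "(a*Y/D) * (a*X/D) - (-(a*C/D)) * (-(a*C/D)) = a\<^sup>2 / D"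
proof -
  have e1: "(a*Y/D)\<^sup>2*X + 2*(a*Y/D)*(-(a*C/D))*C + (-(a*C/D))\<^sup>2*Y = a\<^sup>2 * Y * (X * Y - C\<^sup>2) / D\<^sup>2"
    using D by (simp add: field_simps power2_eq_square)
  show "(a*Y/D)\<^sup>2*X + 2*(a*Y/D)*(-(a*C/D))*C + (-(a*C/D))\<^sup>2*Y = a\<^sup>2 * Y / D"
    unfolding e1 hD using D by (simp add: power2_eq_square)
  have e2: "(-(a*C/D))\<^sup>2*X + 2*(-(a*C/D))*(a*X/D)*C + (a*X/D)\<^sup>2*Y = a\<^sup>2 * X * (X * Y - C\<^sup>2) / D\<^sup>2"
    using D by (simp add: field_simps power2_eq_square)
  show "(-(a*C/D))\<^sup>2*X + 2*(-(a*C/D))*(a*X/D)*C + (a*X/D)\<^sup>2*Y = a\<^sup>2 * X / D"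
    unfolding e2 hD using D by (simp add: power2_eq_square)
  have e3: "(a*Y/D) * (a*X/D) - (-(a*C/D)) * (-(a*C/D)) = a\<^sup>2 * (X * Y - C\<^sup>2) / D\<^sup>2"
    using D by (simp add: field_simps power2_eq_square)
  show "(a*Y/D) * (a*X/D) - (-(a*C/D)) * (-(a*C/D)) = a\<^sup>2 / D"
    unfolding e3 hD using D by (simp add: power2_eq_square)
qed

definition tcard :: "complex^'t::finite^'k \<Rightarrow> real" where "tcard S = real CARD('t)"
definition ncard :: "real^'n::finite \<Rightarrow> real" where "ncard x = real CARD('n)"

context
  fixes lam sigma2 Ps :: real and x y :: "real^'n::finite" and u v :: "real^'k::finite"
    and S :: "complex^'t::finite^'k"
  assumes lam: "lam > 0" and sig: "sigma2 > 0" and Ps: "Ps > 0"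
    and rank: "full_col_rank (steer_mat lam x y u v)"
    and pd: "pos_def (Phi lam sigma2 x y u v S)"
    and varx: "var x > 0" and vary: "var y > 0" and varcov: "var x * var y > (cov x y)\<^sup>2"
    and energy: "\<forall>k. sig_energy S k = real CARD('t) * Ps"
begin

abbreviation "Am \<equiv> steer_mat lam x y u v"
abbreviation "Ph \<equiv> Phi lam sigma2 x y u v S"
abbreviation "PP \<equiv> proj_perp Am"
abbreviation "c0 \<equiv> 2 * pi / lam"
abbreviation "wv k p q \<equiv> pv lam x y u v (\<lambda>n. p * x$n + q * y$n) k"
abbreviation "bv k p q \<equiv> pv lam x y u v (\<lambda>n. p * (x$n - mean x) + q * (y$n - mean y)) k"
abbreviation "hv k p q \<equiv> cadj Am *v bv k p q"
abbreviation "yv k p q \<equiv> matrix_inv (cadj Am ** Am) *v hv k p q"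

lemma RSkk: "RS S $ k $ k = complex_of_real (real CARD('t) * Ps)"
  using energy by (simp add: RS_diag)

lemma wv_split: "wv k p q = complex_of_real p *s dcol lam x y u v (Inl k)
                           + complex_of_real q *s dcol lam x y u v (Inr k)"
  by (simp add: dcol_Inl dcol_Inr pv_comb)

lemma Phz: "(Ph *v zv k p q) $ j
   = 2 / sigma2 * Re (RS S $ k $ blk j * cinner (dcol lam x y u v j) (PP *v wv k p q))"
proof -
  have "PP *v wv k p q = complex_of_real p *s (PP *v dcol lam x y u v (Inl k))
                        + complex_of_real q *s (PP *v dcol lam x y u v (Inr k))"
    unfolding wv_split by (simp add: matrix_vector_right_distrib vector_scalar_commute)
  then show ?thesis
    unfolding mv_zv Phi_entry
    by (simp add: cinner_add_right cinner_scale_right blk_def algebra_simps)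
qed

lemma quad: "zv k p q \<bullet> (Ph *v zv k p q) = (2 * (real CARD('t) * Ps) / sigma2) * Re (cinner (wv k p q) (PP *v wv k p q))"
proof -
  have "cinner (wv k p q) (PP *v wv k p q)
     = complex_of_real p * cinner (dcol lam x y u v (Inl k)) (PP *v wv k p q)
     + complex_of_real q * cinner (dcol lam x y u v (Inr k)) (PP *v wv k p q)"
    by (subst (1) wv_split) (simp add: cinner_add_left cinner_scale_left)
  then show ?thesis
    unfolding inner_zv Phz by (simp add: blk_def RSkk algebra_simps)
qed

lemma wv_decomp: "wv k p q = bv k p q + Am *v axis k (cinner (steer lam x y u v k) (wv k p q)
                      / complex_of_real ((norm (steer lam x y u v k))\<^sup>2))"
proof -
  have "proj_perp_vec (steer lam x y u v k) *v wv k p q = bv k p q"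
    by (simp add: proj_pv ctr_lin)
  then show ?thesis
    unfolding steer_mat_axis by (simp add: proj_perp_vec_apply algebra_simps)
qed

lemmas PQ = Pi_quad[OF rank wv_decomp]

lemma norm_bv: "(norm (bv k p q))\<^sup>2 = c0\<^sup>2 * (real CARD('n) * (p\<^sup>2 * var x + 2 * p * q * cov x y + q\<^sup>2 * var y))"
  by (simp add: norm_pv stat_sums)

lemma hv_lin: "hv k p q = complex_of_real p *s hv k 1 0 + complex_of_real q *s hv k 0 1"
proof -
  have "bv k p q = complex_of_real p *s bv k 1 0 + complex_of_real q *s bv k 0 1"
    by (simp add: pv_comb)
  then show ?thesis
    by (simp add: matrix_vector_right_distrib vector_scalar_commute)
qed

lemma Phz_block:
  assumes h: "hv k p q = 0" and bj: "blk j = k"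
  shows "(Ph *v zv k p q) $ j = (2 * (real CARD('t) * Ps) / sigma2) * c0\<^sup>2 * real CARD('n) *
           (case ddir j of U \<Rightarrow> p * var x + q * cov x y | V \<Rightarrow> p * cov x y + q * var y)"
proof -
  have P: "PP *v wv k p q = bv k p q" using PQ(1) h by simp
  have D: "dcol lam x y u v j = pv lam x y u v (dsel x y (ddir j)) k"
    using bj by (simp add: dcol_def adot_pv)
  have cU: "cinner (pv lam x y u v (\<lambda>n. x$n) k) (bv k p q)
      = complex_of_real (c0\<^sup>2 * (real CARD('n) * (p * var x + q * cov x y)))"
    by (simp only: cinner_pv stat_sums)
  have cV: "cinner (pv lam x y u v (\<lambda>n. y$n) k) (bv k p q)
      = complex_of_real (c0\<^sup>2 * (real CARD('n) * (p * cov x y + q * var y)))"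
    by (simp only: cinner_pv stat_sums)
  show ?thesis
    unfolding Phz P D using bj
    by (cases "ddir j") (simp_all only: dsel_U dsel_V cU cV RSkk dir.case, simp_all add: algebra_simps add_divide_distrib)
qed


abbreviation "DD \<equiv> var x * var y - (cov x y)\<^sup>2"
definition "al = 1 / ((2 * (tcard S * Ps) / sigma2) * c0\<^sup>2 * ncard x)"

definition "pp (i::'k+'k) = (case i of Inl _ \<Rightarrow> al * var y / DD | Inr _ \<Rightarrow> - (al * cov x y / DD))"
definition "qq (i::'k+'k) = (case i of Inl _ \<Rightarrow> - (al * cov x y / DD) | Inr _ \<Rightarrow> al * var x / DD)"
definition "tgt (i::'k+'k) = (case i of Inl _ \<Rightarrow> al * var y / DD | Inr _ \<Rightarrow> al * var x / DD)"
definition "zz i = zv (blk i) (pp i) (qq i)"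
definition "g1 i = axis i 1 \<bullet> (matrix_inv Ph *v axis i 1) - (2 * (zz i \<bullet> axis i 1) - zz i \<bullet> (Ph *v zz i))"
definition "g2 i = (norm (Am *v yv (blk i) (pp i) (qq i)))\<^sup>2"

lemma DD_pos: "DD > 0" using varcov by simp

lemma kap_pos: "2 * (real CARD('t) * Ps) / sigma2 > 0"
  using Ps sig by simp

lemma al_pos: "al > 0"
  using sig Ps lam unfolding al_def tcard_def ncard_def
  by (auto simp: card_gt_0_iff intro!: divide_pos_pos mult_pos_pos)

lemma kap_al: "(2 * (real CARD('t) * Ps) / sigma2) * c0\<^sup>2 * real CARD('n) = 1 / al"
  by (simp add: al_def tcard_def ncard_def)

lemma det_ne: "pp (Inl k) * qq (Inr k) - qq (Inl k) * pp (Inr k) \<noteq> 0"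
  unfolding pp_def qq_def using alg_quad(3)[of DD "var x" "var y" "cov x y" al] al_pos DD_pos
  by simp

lemma tgt_eq: "2 * (zz i \<bullet> axis i 1) - (1 / al) *
   ((pp i)\<^sup>2 * var x + 2 * pp i * qq i * cov x y + (qq i)\<^sup>2 * var y) = tgt i"
proof -
  have a: "al \<noteq> 0" using al_pos by simp
  have d: "DD \<noteq> 0" using DD_pos by simp
  show ?thesis
  proof (cases i)
    case (Inl k)
    have "2 * (al * var y / DD) - (1 / al) * (al\<^sup>2 * var y / DD) = al * var y / DD"
      using a d by (rule alg_t)
    then show ?thesis using Inl alg_quad(1)[OF d refl, of al]
      by (simp add: pp_def qq_def tgt_def inner_zv blk_def zz_def axis_def)
  next
    case (Inr k)
    have "2 * (al * var x / DD) - (1 / al) * (al\<^sup>2 * var x / DD) = al * var x / DD"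
      using a d by (rule alg_t)
    then show ?thesis using Inr alg_quad(2)[OF d refl, of al]
      by (simp add: pp_def qq_def tgt_def inner_zv blk_def zz_def axis_def)
  qed
qed

lemma diag_decomp:
  "axis i 1 \<bullet> (matrix_inv Ph *v axis i 1) = tgt i + (g1 i + (2 * (real CARD('t) * Ps) / sigma2) * g2 i)"
proof -
  have "zz i \<bullet> (Ph *v zz i) = (2 * (real CARD('t) * Ps) / sigma2) *
     (c0\<^sup>2 * (real CARD('n) * ((pp i)\<^sup>2 * var x + 2 * pp i * qq i * cov x y + (qq i)\<^sup>2 * var y)) - g2 i)"
    unfolding zz_def quad PQ(2) norm_bv g2_def ..
  also have "\<dots> = (1 / al) * ((pp i)\<^sup>2 * var x + 2 * pp i * qq i * cov x y + (qq i)\<^sup>2 * var y)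
      - (2 * (real CARD('t) * Ps) / sigma2) * g2 i"
    by (subst kap_al[symmetric]) (simp only: right_diff_distrib mult.assoc)
  finally have "zz i \<bullet> (Ph *v zz i) = \<dots>" .
  then show ?thesis using tgt_eq[of i] by (simp add: g1_def)
qed

lemma g_nonneg: "g1 i \<ge> 0" "g2 i \<ge> 0"
  using pd_var(1)[OF pd] by (simp_all add: g1_def g2_def)


lemma trace_decomp:
  "trace (matrix_inv Ph) = (\<Sum>i\<in>(UNIV::('k+'k) set). tgt i) + (\<Sum>i\<in>UNIV. g1 i + (2 * (real CARD('t) * Ps) / sigma2) * g2 i)"
  unfolding trace_axis diag_decomp by (simp add: sum.distrib)

lemma sum_tgt: "(\<Sum>i\<in>(UNIV::('k+'k) set). tgt i) = real CARD('k) * (al * var y / DD + al * var x / DD)"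
  by (simp add: sum_UNIV_Plus tgt_def sum.distrib algebra_simps)

lemma bnd_eq:
  "real CARD('k) * sigma2 * lam\<^sup>2 / (8 * real CARD('n) * real CARD('t) * Ps * pi\<^sup>2) *
     (1 / (var x - (cov x y)\<^sup>2 / var y) + 1 / (var y - (cov x y)\<^sup>2 / var x))
   = (\<Sum>i\<in>(UNIV::('k+'k) set). tgt i)"
  unfolding sum_tgt al_def tcard_def ncard_def
  by (rule alg_bnd[OF sig lam _ _ Ps varx vary DD_pos refl]) (simp_all add: card_gt_0_iff)

lemma g1_zero: "g1 i = 0 \<longleftrightarrow> Ph *v zz i = axis i 1"
  unfolding g1_def using pd_var(2)[OF pd] by simp

lemma g2_zero: "g2 i = 0 \<longleftrightarrow> hv (blk i) (pp i) (qq i) = 0"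
  unfolding g2_def using PQ(3) by simp

lemma main_ineq:
  defines "bnd \<equiv> real CARD('k) * sigma2 * lam\<^sup>2 / (8 * real CARD('n) * real CARD('t) * Ps * pi\<^sup>2) *
     (1 / (var x - (cov x y)\<^sup>2 / var y) + 1 / (var y - (cov x y)\<^sup>2 / var x))"
  shows "trace (CRB lam sigma2 x y u v S) \<ge> bnd"
    and "trace (CRB lam sigma2 x y u v S) = bnd \<longleftrightarrow>
           (\<forall>i. Ph *v zz i = axis i 1 \<and> hv (blk i) (pp i) (qq i) = 0)"
proof -
  have nn: "\<And>i. g1 i + (2 * (real CARD('t) * Ps) / sigma2) * g2 i \<ge> 0"
  proof -
    fix i
    have "0 \<le> (2 * (real CARD('t) * Ps) / sigma2) * g2 i"
      using kap_pos g_nonneg(2)[of i] by (intro mult_nonneg_nonneg) auto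
    then show "g1 i + (2 * (real CARD('t) * Ps) / sigma2) * g2 i \<ge> 0"
      using g_nonneg(1)[of i] by linarith
  qed
  have tr: "trace (CRB lam sigma2 x y u v S) = bnd + (\<Sum>i\<in>UNIV. g1 i + (2 * (real CARD('t) * Ps) / sigma2) * g2 i)"
    unfolding CRB_def trace_decomp bnd_def bnd_eq ..
  show "trace (CRB lam sigma2 x y u v S) \<ge> bnd"
    unfolding tr using nn by (simp add: sum_nonneg)
  have "trace (CRB lam sigma2 x y u v S) = bnd \<longleftrightarrow>
        (\<forall>i\<in>UNIV. g1 i + (2 * (real CARD('t) * Ps) / sigma2) * g2 i = 0)"
    unfolding tr using nn by (simp add: sum_nonneg_eq_0_iff)
  also have "\<dots> \<longleftrightarrow> (\<forall>i. g1 i = 0 \<and> g2 i = 0)"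
  proof -
    have "\<And>i. g1 i + (2 * (real CARD('t) * Ps) / sigma2) * g2 i = 0 \<longleftrightarrow> g1 i = 0 \<and> g2 i = 0"
    proof -
      fix i
      have a: "g1 i \<ge> 0" "g2 i \<ge> 0" by (rule g_nonneg)+
      have k: "(2 * (real CARD('t) * Ps) / sigma2) > 0" by (rule kap_pos)
      show "?thesis i"
      proof
        assume h: "g1 i + (2 * (real CARD('t) * Ps) / sigma2) * g2 i = 0"
        have "(2 * (real CARD('t) * Ps) / sigma2) * g2 i \<ge> 0" using a k by (intro mult_nonneg_nonneg) auto
        then have "g1 i = 0" using h a by linarith
        then show "g1 i = 0 \<and> g2 i = 0" using h k Ps sig by simp
      qed simp
    qed
    then show ?thesis by simp
  qed
  finally show "trace (CRB lam sigma2 x y u v S) = bnd \<longleftrightarrow>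
           (\<forall>i. Ph *v zz i = axis i 1 \<and> hv (blk i) (pp i) (qq i) = 0)"
    by (simp add: g1_zero g2_zero)
qed


lemma Hz_pq: "(\<forall>k. hv k 1 0 = 0 \<and> hv k 0 1 = 0) \<longleftrightarrow> (\<forall>i. hv (blk i) (pp i) (qq i) = 0)"
proof -
  have "\<And>k. (hv k (pp (Inl k)) (qq (Inl k)) = 0 \<and> hv k (pp (Inr k)) (qq (Inr k)) = 0)
             \<longleftrightarrow> (hv k 1 0 = 0 \<and> hv k 0 1 = 0)"
    by (subst (1 2) hv_lin) (rule elim2_vec[OF det_ne])
  then show ?thesis
    by (subst all_sum_iff) (auto simp: blk_def)
qed

lemma off_of_cond:
  assumes c: "\<forall>i. Ph *v zz i = axis i 1"
  shows "\<forall>i j. blk i \<noteq> blk j \<longrightarrow> Ph $ i $ j = 0"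
proof (intro allI impI)
  fix i j :: "'k + 'k" assume bij: "blk i \<noteq> blk j"
  define k where "k = blk j"
  have ni: "i \<noteq> Inl k" "i \<noteq> Inr k" using bij by (auto simp: k_def blk_def)
  have e1: "(Ph *v zz (Inl k)) $ i = 0" using c ni by (simp add: axis_def)
  have e2: "(Ph *v zz (Inr k)) $ i = 0" using c ni by (simp add: axis_def)
  have v1: "(Ph *v zz (Inl k)) $ i = Ph $ i $ Inl k * pp (Inl k) + Ph $ i $ Inr k * qq (Inl k)"
    by (simp add: zz_def mv_zv blk_def)
  have v2: "(Ph *v zz (Inr k)) $ i = Ph $ i $ Inl k * pp (Inr k) + Ph $ i $ Inr k * qq (Inr k)"
    by (simp add: zz_def mv_zv blk_def)
  have "Ph $ i $ Inl k * pp (Inl k) + Ph $ i $ Inr k * qq (Inl k) = 0 \<and>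
        Ph $ i $ Inl k * pp (Inr k) + Ph $ i $ Inr k * qq (Inr k) = 0"
    using e1 e2 v1 v2 by linarith
  then have "Ph $ i $ Inl k = 0 \<and> Ph $ i $ Inr k = 0"
    by (rule elim2_real'[OF det_ne, THEN iffD1])
  then show "Ph $ i $ j = 0" by (cases j) (auto simp: k_def blk_def)
qed

lemma cond_of:
  assumes off: "\<forall>i j. blk i \<noteq> blk j \<longrightarrow> Ph $ i $ j = 0"
    and hz: "\<forall>k. hv k 1 0 = 0 \<and> hv k 0 1 = 0"
  shows "Ph *v zz i = axis i 1"
proof -
  define k where "k = blk i"
  have hk: "hv k (pp i) (qq i) = 0" using hz hv_lin by simp
  have a: "al \<noteq> 0" using al_pos by simp
  have d: "DD \<noteq> 0" using DD_pos by simp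
  note E = alg_e[OF a d refl]
  show ?thesis
  proof (subst vec_eq_iff, intro allI)
    fix j
    show "(Ph *v zz i) $ j = axis i 1 $ j"
    proof (cases "blk j = k")
      case False
      then have "Ph $ j $ Inl k = 0" "Ph $ j $ Inr k = 0" "j \<noteq> i"
        using off by (auto simp: blk_def k_def)
      then show ?thesis by (simp add: zz_def mv_zv k_def[symmetric] axis_def)
    next
      case True
      have "(Ph *v zz i) $ j = (1 / al) *
           (case ddir j of U \<Rightarrow> pp i * var x + qq i * cov x y | V \<Rightarrow> pp i * cov x y + qq i * var y)"
        unfolding zz_def k_def[symmetric] Phz_block[OF hk True] kap_al ..
      also have "\<dots> = axis i 1 $ j"
        using True unfolding k_def
        by (cases i; cases j) (simp_all only: pp_def qq_def ddir_def sum.case dir.case E,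
            simp_all add: axis_def blk_def)
      finally show ?thesis .
    qed
  qed
qed

lemma cond_i_iff:
  "(\<forall>k k'. k \<noteq> k' \<longrightarrow> (\<forall>d d'.
      Re (transpose (RS S) $ k $ k' *
          cinner (adot lam x y u v d k)
                 (proj_perp (steer_mat lam x y u v) *v adot lam x y u v d' k')) = 0))
   \<longleftrightarrow> (\<forall>i j. blk i \<noteq> blk j \<longrightarrow> Ph $ i $ j = 0)"
proof
  assume h: "\<forall>k k'. k \<noteq> k' \<longrightarrow> (\<forall>d d'.
      Re (transpose (RS S) $ k $ k' *
          cinner (adot lam x y u v d k)
                 (proj_perp (steer_mat lam x y u v) *v adot lam x y u v d' k')) = 0)"
  show "\<forall>i j. blk i \<noteq> blk j \<longrightarrow> Ph $ i $ j = 0"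
    using h by (auto simp: Phi_entry dcol_def transpose_def)
next
  assume h: "\<forall>i j. blk i \<noteq> blk j \<longrightarrow> Ph $ i $ j = 0"
  show "\<forall>k k'. k \<noteq> k' \<longrightarrow> (\<forall>d d'.
      Re (transpose (RS S) $ k $ k' *
          cinner (adot lam x y u v d k)
                 (proj_perp (steer_mat lam x y u v) *v adot lam x y u v d' k')) = 0)"
  proof (intro allI impI)
    fix k k' d d' assume kk: "(k::'k) \<noteq> k'"
    have "Ph $ mk d k $ mk d' k' = 0" using h kk by simp
    then show "Re (transpose (RS S) $ k $ k' *
          cinner (adot lam x y u v d k)
                 (proj_perp (steer_mat lam x y u v) *v adot lam x y u v d' k')) = 0"
      using sig by (simp add: Phi_entry dcol_def transpose_def)
  qed
qed

lemma Pu: "proj_perp_vec (steer lam x y u v k) *v adot lam x y u v U k = bv k 1 0"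
proof -
  have "ctr (\<lambda>n. x$n) = (\<lambda>n. 1 * (x$n - mean x) + 0 * (y$n - mean y))"
    by (simp add: ctr_def mean_def fun_eq_iff)
  then show ?thesis by (simp add: adot_pv dsel_U proj_pv)
qed

lemma Pv: "proj_perp_vec (steer lam x y u v k) *v adot lam x y u v V k = bv k 0 1"
proof -
  have "ctr (\<lambda>n. y$n) = (\<lambda>n. 0 * (x$n - mean x) + 1 * (y$n - mean y))"
    by (simp add: ctr_def mean_def fun_eq_iff)
  then show ?thesis by (simp add: adot_pv dsel_V proj_pv)
qed

lemma zeta_vals: "zeta lam x y u v U k = cov x y / var y" "zeta lam x y u v V k = cov x y / var x"
proof -
  have ci: "cinner (adot lam x y u v U k) (bv k 0 1) = complex_of_real (c0\<^sup>2 * (real CARD('n) * (0 * var x + 1 * cov x y)))"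
    unfolding adot_pv dsel_U by (simp only: cinner_pv stat_sums)
  have nv: "(norm (bv k 0 1))\<^sup>2 = c0\<^sup>2 * (real CARD('n) * (0\<^sup>2 * var x + 2 * 0 * 1 * cov x y + 1\<^sup>2 * var y))"
    by (rule norm_bv)
  have nu: "(norm (bv k 1 0))\<^sup>2 = c0\<^sup>2 * (real CARD('n) * (1\<^sup>2 * var x + 2 * 1 * 0 * cov x y + 0\<^sup>2 * var y))"
    by (rule norm_bv)
  have c0: "c0 \<noteq> 0" using lam by simp
  have N: "real CARD('n) \<noteq> 0" by (simp add: card_gt_0_iff)
  show "zeta lam x y u v U k = cov x y / var y"
    unfolding zeta_def Let_def Pv ci nv using c0 N by simp
  show "zeta lam x y u v V k = cov x y / var x"
    unfolding zeta_def Let_def Pv Pu ci nu using c0 N by simp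
qed

lemma cond_ii_iff:
  "(\<forall>k. \<forall>(d, d') \<in> {(U, V), (V, U)}.
      cadj (steer_mat lam x y u v) *v
        (proj_perp_vec (steer lam x y u v k) *v
           (adot lam x y u v d k - complex_of_real (zeta lam x y u v d k) *s adot lam x y u v d' k))
      = 0)
   \<longleftrightarrow> (\<forall>k. hv k 1 0 = 0 \<and> hv k 0 1 = 0)"
proof -
  have t1: "proj_perp_vec (steer lam x y u v k) *v
           (adot lam x y u v U k - complex_of_real (zeta lam x y u v U k) *s adot lam x y u v V k)
           = bv k 1 (- (cov x y / var y))" for k
  proof -
    have "adot lam x y u v U k - complex_of_real (zeta lam x y u v U k) *s adot lam x y u v V k
        = wv k 1 (- (cov x y / var y))"
      by (simp only: zeta_vals adot_pv dsel_U dsel_V pv_diff, simp)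
    then show ?thesis by (simp only: proj_pv ctr_lin)
  qed
  have t2: "proj_perp_vec (steer lam x y u v k) *v
           (adot lam x y u v V k - complex_of_real (zeta lam x y u v V k) *s adot lam x y u v U k)
           = bv k (- (cov x y / var x)) 1" for k
  proof -
    have "adot lam x y u v V k - complex_of_real (zeta lam x y u v V k) *s adot lam x y u v U k
        = wv k (- (cov x y / var x)) 1"
      by (simp only: zeta_vals adot_pv dsel_U dsel_V pv_diff, simp add: algebra_simps)
    then show ?thesis by (simp only: proj_pv ctr_lin)
  qed
  have det: "1 * 1 - (- (cov x y / var y)) * (- (cov x y / var x)) \<noteq> 0"
  proof -
    have "(cov x y / var y) * (cov x y / var x) = (cov x y)\<^sup>2 / (var x * var y)"
      by (simp add: power2_eq_square)
    also have "\<dots> < 1" using varcov varx vary by simp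
    finally show ?thesis by linarith
  qed
  have "\<And>k. (hv k 1 (- (cov x y / var y)) = 0 \<and> hv k (- (cov x y / var x)) 1 = 0)
             \<longleftrightarrow> (hv k 1 0 = 0 \<and> hv k 0 1 = 0)"
    by (subst (1 2) hv_lin) (rule elim2_vec[OF det])
  then show ?thesis by (simp add: t1 t2)
qed

lemma main_eq:
  defines "bnd \<equiv> real CARD('k) * sigma2 * lam\<^sup>2 / (8 * real CARD('n) * real CARD('t) * Ps * pi\<^sup>2) *
     (1 / (var x - (cov x y)\<^sup>2 / var y) + 1 / (var y - (cov x y)\<^sup>2 / var x))"
  shows "trace (CRB lam sigma2 x y u v S) = bnd \<longleftrightarrow>
          (\<forall>k k'. k \<noteq> k' \<longrightarrow> (\<forall>d d'.
              Re (transpose (RS S) $ k $ k' *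
                  cinner (adot lam x y u v d k)
                         (proj_perp (steer_mat lam x y u v) *v adot lam x y u v d' k')) = 0))
          \<and> (\<forall>k. \<forall>(d, d') \<in> {(U, V), (V, U)}.
              cadj (steer_mat lam x y u v) *v
                (proj_perp_vec (steer lam x y u v k) *v
                   (adot lam x y u v d k - complex_of_real (zeta lam x y u v d k) *s adot lam x y u v d' k))
              = 0)"
proof -
  have "trace (CRB lam sigma2 x y u v S) = bnd \<longleftrightarrow>
           (\<forall>i. Ph *v zz i = axis i 1 \<and> hv (blk i) (pp i) (qq i) = 0)"
    unfolding bnd_def by (rule main_ineq(2))
  also have "\<dots> \<longleftrightarrow> (\<forall>i j. blk i \<noteq> blk j \<longrightarrow> Ph $ i $ j = 0) \<and> (\<forall>k. hv k 1 0 = 0 \<and> hv k 0 1 = 0)"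
    using off_of_cond cond_of Hz_pq by blast
  finally show ?thesis unfolding cond_i_iff cond_ii_iff .
qed

end

lemma chain_ineq:
  fixes vx vy cv B :: real
  assumes vx: "vx > 0" and vy: "vy > 0" and vc: "vx * vy > cv\<^sup>2" and B: "vx + vy \<le> B"
  shows "1 / (vx - cv\<^sup>2 / vy) + 1 / (vy - cv\<^sup>2 / vx) \<ge> 4 / B"
    and "1 / (vx - cv\<^sup>2 / vy) + 1 / (vy - cv\<^sup>2 / vx) = 4 / B \<longleftrightarrow> cv = 0 \<and> vx = vy \<and> vx + vy = B"
proof -
  define D where "D = vx * vy - cv\<^sup>2"
  have D: "D > 0" using vc by (simp add: D_def)
  have s: "vx + vy > 0" using vx vy by simp
  have Bp: "B > 0" using s B by simp
  have S1: "1 / (vx - cv\<^sup>2 / vy) + 1 / (vy - cv\<^sup>2 / vx) = (vx + vy) / D"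
  proof -
    have "vx - cv\<^sup>2 / vy = D / vy" using vy by (simp add: D_def field_simps)
    moreover have "vy - cv\<^sup>2 / vx = D / vx" using vx by (simp add: D_def field_simps)
    ultimately show ?thesis using D vx vy by (simp add: field_simps)
  qed
  define t1 where "t1 = (vx + vy) * cv\<^sup>2 / (D * (vx * vy))"
  define t2 where "t2 = (vx - vy)\<^sup>2 / (vx * vy * (vx + vy))"
  define t3 where "t3 = 4 * (B - (vx + vy)) / ((vx + vy) * B)"
  have t1: "t1 \<ge> 0" "t1 = 0 \<longleftrightarrow> cv = 0" using D vx vy s by (auto simp: t1_def)
  have t2: "t2 \<ge> 0" "t2 = 0 \<longleftrightarrow> vx = vy" using vx vy s by (auto simp: t2_def)
  have t3: "t3 \<ge> 0" "t3 = 0 \<longleftrightarrow> vx + vy = B" using B s Bp by (auto simp: t3_def)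
  have dec: "(vx + vy) / D - 4 / B = t1 + t2 + t3"
  proof -
    have h: "vx * vy - D = cv\<^sup>2" by (simp add: D_def)
    have "(vx + vy) / D - (vx + vy) / (vx * vy) = (vx + vy) * (vx * vy - D) / (D * (vx * vy))"
      using D vx vy by (simp add: field_simps)
    then have "(vx + vy) / D - (vx + vy) / (vx * vy) = t1" unfolding h t1_def .
    then have e1: "(vx + vy) / D = (vx + vy) / (vx * vy) + t1" by simp
    have "(vx + vy) / (vx * vy) - 4 / (vx + vy) = ((vx + vy) * (vx + vy) - 4 * (vx * vy)) / ((vx * vy) * (vx + vy))"
      using vx vy s by (intro diff_frac_eq) auto
    also have "(vx + vy) * (vx + vy) - 4 * (vx * vy) = (vx - vy)\<^sup>2"
      by (simp add: power2_eq_square algebra_simps)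
    finally have e2: "(vx + vy) / (vx * vy) = 4 / (vx + vy) + t2"
      unfolding t2_def by simp
    have g: "\<And>z. z > 0 \<Longrightarrow> 4 / z = 4 / B + 4 * (B - z) / (z * B)"
      using Bp by (simp add: field_simps)
    have e3: "4 / (vx + vy) = 4 / B + t3"
      unfolding t3_def using g[OF s] .
    show ?thesis using e1 e2 e3 by simp
  qed
  show "1 / (vx - cv\<^sup>2 / vy) + 1 / (vy - cv\<^sup>2 / vx) \<ge> 4 / B"
    unfolding S1 using dec t1 t2 t3 by linarith
  show "1 / (vx - cv\<^sup>2 / vy) + 1 / (vy - cv\<^sup>2 / vx) = 4 / B \<longleftrightarrow> cv = 0 \<and> vx = vy \<and> vx + vy = B"
    unfolding S1 using dec t1 t2 t3 by linarith
qed

lemma var_alt: "var (x::real^'n::finite) = (\<Sum>n\<in>UNIV. (x$n)\<^sup>2) / real CARD('n) - (mean x)\<^sup>2"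
proof -
  have N: "real CARD('n) > 0" by (simp add: card_gt_0_iff)
  have sx: "(\<Sum>n\<in>UNIV. x$n) = real CARD('n) * mean x" using N by (simp add: mean_def)
  have "(\<Sum>n\<in>UNIV. (x$n - mean x)\<^sup>2) = (\<Sum>n\<in>UNIV. (x$n)\<^sup>2 + (mean x)\<^sup>2 - 2 * x$n * mean x)"
    by (simp only: power2_diff)
  also have "\<dots> = (\<Sum>n\<in>UNIV. (x$n)\<^sup>2) + real CARD('n) * (mean x)\<^sup>2 - 2 * mean x * (\<Sum>n\<in>UNIV. x$n)"
    by (simp add: sum.distrib sum_subtractf sum_distrib_left sum_distrib_right mult_ac)
  finally show ?thesis unfolding var_def sx using N by (simp add: field_simps power2_eq_square)
qed

lemma sum_bound:
  fixes x y :: "real^'n::finite" and A :: real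
  assumes sq: "\<forall>n. \<bar>x$n\<bar> \<le> A / 2 \<and> \<bar>y$n\<bar> \<le> A / 2"
  shows "var x + var y \<le> A\<^sup>2 / 2"
    and "var x + var y = A\<^sup>2 / 2 \<longleftrightarrow> mean x = 0 \<and> mean y = 0 \<and> (\<forall>n. (x$n)\<^sup>2 + (y$n)\<^sup>2 = A\<^sup>2 / 2)"
proof -
  have N: "real CARD('n) > 0" by (simp add: card_gt_0_iff)
  have pt: "\<And>n. (x$n)\<^sup>2 + (y$n)\<^sup>2 \<le> A\<^sup>2 / 2"
  proof -
    fix n
    have "\<bar>x$n\<bar>\<^sup>2 \<le> (A/2)\<^sup>2" using sq by (intro power_mono) auto
    then have "(x$n)\<^sup>2 \<le> (A/2)\<^sup>2" by simp
    moreover have "\<bar>y$n\<bar>\<^sup>2 \<le> (A/2)\<^sup>2" using sq by (intro power_mono) auto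
    then have "(y$n)\<^sup>2 \<le> (A/2)\<^sup>2" by simp
    ultimately show "(x$n)\<^sup>2 + (y$n)\<^sup>2 \<le> A\<^sup>2 / 2" by (simp add: power_divide)
  qed
  define Q where "Q = (\<Sum>n\<in>UNIV. (x$n)\<^sup>2 + (y$n)\<^sup>2)"
  have Qle: "Q \<le> real CARD('n) * (A\<^sup>2 / 2)"
    unfolding Q_def using sum_mono[of UNIV "\<lambda>n. (x$n)\<^sup>2 + (y$n)\<^sup>2" "\<lambda>_. A\<^sup>2/2"] pt by simp
  have Qeq: "Q = real CARD('n) * (A\<^sup>2 / 2) \<longleftrightarrow> (\<forall>n. (x$n)\<^sup>2 + (y$n)\<^sup>2 = A\<^sup>2 / 2)"
  proof -
    have "Q = real CARD('n) * (A\<^sup>2 / 2) \<longleftrightarrow> (\<Sum>n\<in>UNIV. A\<^sup>2 / 2 - ((x$n)\<^sup>2 + (y$n)\<^sup>2)) = 0"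
      unfolding Q_def by (auto simp: sum_subtractf)
    also have "\<dots> \<longleftrightarrow> (\<forall>n\<in>UNIV. A\<^sup>2 / 2 - ((x$n)\<^sup>2 + (y$n)\<^sup>2) = 0)"
      using pt by (intro sum_nonneg_eq_0_iff) auto
    finally show ?thesis by auto
  qed
  have vs: "var x + var y = Q / real CARD('n) - (mean x)\<^sup>2 - (mean y)\<^sup>2"
    unfolding var_alt Q_def by (simp add: sum.distrib add_divide_distrib)
  have QN: "Q / real CARD('n) \<le> A\<^sup>2 / 2" using Qle N by (simp add: field_simps)
  have QNe: "Q / real CARD('n) = A\<^sup>2 / 2 \<longleftrightarrow> Q = real CARD('n) * (A\<^sup>2 / 2)" using N by (auto simp: field_simps)
  have m: "(mean x)\<^sup>2 \<ge> 0" "(mean y)\<^sup>2 \<ge> 0" by simp_all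
  show "var x + var y \<le> A\<^sup>2 / 2" unfolding vs using QN m by linarith
  show "var x + var y = A\<^sup>2 / 2 \<longleftrightarrow> mean x = 0 \<and> mean y = 0 \<and> (\<forall>n. (x$n)\<^sup>2 + (y$n)\<^sup>2 = A\<^sup>2 / 2)"
  proof
    assume h: "var x + var y = A\<^sup>2 / 2"
    then have "(mean x)\<^sup>2 = 0" "(mean y)\<^sup>2 = 0" "Q / real CARD('n) = A\<^sup>2 / 2"
      using vs QN m by linarith+
    then show "mean x = 0 \<and> mean y = 0 \<and> (\<forall>n. (x$n)\<^sup>2 + (y$n)\<^sup>2 = A\<^sup>2 / 2)"
      using QNe Qeq by simp
  next
    assume "mean x = 0 \<and> mean y = 0 \<and> (\<forall>n. (x$n)\<^sup>2 + (y$n)\<^sup>2 = A\<^sup>2 / 2)"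
    then show "var x + var y = A\<^sup>2 / 2" using vs QNe Qeq by simp
  qed
qed

lemma bnd_b_lemma:
  fixes x y :: "real^'n::finite" and A c :: real
  assumes A: "A > 0" and c: "c > 0"
    and sq: "\<forall>n. \<bar>x$n\<bar> \<le> A / 2 \<and> \<bar>y$n\<bar> \<le> A / 2"
    and varx: "var x > 0" and vary: "var y > 0" and varcov: "var x * var y > (cov x y)\<^sup>2"
  shows "c / 8 * (1 / (var x - (cov x y)\<^sup>2 / var y) + 1 / (var y - (cov x y)\<^sup>2 / var x)) \<ge> c / A\<^sup>2"
    and "c / 8 * (1 / (var x - (cov x y)\<^sup>2 / var y) + 1 / (var y - (cov x y)\<^sup>2 / var x)) = c / A\<^sup>2
         \<longleftrightarrow> cov x y = 0 \<and> var x = var y \<and> mean x = 0 \<and> mean y = 0 \<and>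
             (\<forall>n. (x$n)\<^sup>2 + (y$n)\<^sup>2 = A\<^sup>2 / 2)"
proof -
  note CI = chain_ineq[OF varx vary varcov sum_bound(1)[OF sq]]
  have e: "4 / (A\<^sup>2 / 2) = 8 / A\<^sup>2" by simp
  let ?S = "1 / (var x - (cov x y)\<^sup>2 / var y) + 1 / (var y - (cov x y)\<^sup>2 / var x)"
  have dd: "c / 8 * ?S - c / A\<^sup>2 = c / 8 * (?S - 8 / A\<^sup>2)" by (simp add: right_diff_distrib)
  have c8: "c / 8 > 0" using c by simp
  have eq: "c / 8 * ?S = c / A\<^sup>2 \<longleftrightarrow> ?S = 8 / A\<^sup>2"
  proof -
    have "c / 8 * ?S = c / A\<^sup>2 \<longleftrightarrow> c / 8 * (?S - 8 / A\<^sup>2) = 0" using dd by linarith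
    also have "\<dots> \<longleftrightarrow> ?S - 8 / A\<^sup>2 = 0" using c8 by simp
    finally show ?thesis by linarith
  qed
  have le: "c / 8 * ?S \<ge> c / A\<^sup>2 \<longleftrightarrow> ?S \<ge> 8 / A\<^sup>2"
  proof -
    have "c / 8 * ?S \<ge> c / A\<^sup>2 \<longleftrightarrow> c / 8 * (?S - 8 / A\<^sup>2) \<ge> 0" using dd by linarith
    also have "\<dots> \<longleftrightarrow> ?S - 8 / A\<^sup>2 \<ge> 0" using c8 by (simp add: zero_le_mult_iff)
    finally show ?thesis by linarith
  qed
  show "c / 8 * ?S \<ge> c / A\<^sup>2" unfolding le using CI(1) e by simp
  show "c / 8 * ?S = c / A\<^sup>2 \<longleftrightarrow> cov x y = 0 \<and> var x = var y \<and> mean x = 0 \<and> mean y = 0 \<and>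
             (\<forall>n. (x$n)\<^sup>2 + (y$n)\<^sup>2 = A\<^sup>2 / 2)"
    unfolding eq using CI(2) e sum_bound(2)[OF sq] by auto
qed


theorem theorem1:
  fixes lam sigma2 Ps A :: real
    and x y :: "real^'n"
    and u v :: "real^'k"
    and S :: "complex^'t^'k"
  defines "K \<equiv> real CARD('k)" and "N \<equiv> real CARD('n)" and "T \<equiv> real CARD('t)"
  defines "bnd_a \<equiv> K * sigma2 * lam\<^sup>2 / (8 * N * T * Ps * pi\<^sup>2) *
              (1 / (var x - (cov x y)\<^sup>2 / var y) + 1 / (var y - (cov x y)\<^sup>2 / var x))"
      and "bnd_b \<equiv> K * sigma2 * lam\<^sup>2 / (N * T * Ps * A\<^sup>2 * pi\<^sup>2)"
  assumes NK: "CARD('n) > CARD('k)"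
    and lam: "lam > 0" and sigma2: "sigma2 > 0" and A: "A > 0" and Ps: "Ps > 0"
    and square: "\<forall>n. \<bar>x$n\<bar> \<le> A / 2 \<and> \<bar>y$n\<bar> \<le> A / 2"
    and rank: "full_col_rank (steer_mat lam x y u v)"
    and pd: "pos_def (Phi lam sigma2 x y u v S)"
    and varx: "var x > 0" and vary: "var y > 0"
    and varcov: "var x * var y > (cov x y)\<^sup>2"
    and energy: "\<forall>k. sig_energy S k = T * Ps"
  shows
    "trace (CRB lam sigma2 x y u v S) \<ge> bnd_a \<and> bnd_a \<ge> bnd_b

     \<and> (\<forall>(M::nat) (uu :: nat \<Rightarrow> real^'k) (vv :: nat \<Rightarrow> real^'k) (SS :: nat \<Rightarrow> complex^'t^'k).
          M \<ge> 1 \<and> (\<forall>m\<in>{1..M}. realization_ok lam sigma2 Ps x y (uu m) (vv m) (SS m)) \<longrightarrow>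
          (let avg = (\<Sum>m=1..M. trace (CRB lam sigma2 x y (uu m) (vv m) (SS m))) / real M
           in avg \<ge> bnd_a \<and> avg \<ge> bnd_b))

     \<and> (trace (CRB lam sigma2 x y u v S) = bnd_a \<longleftrightarrow>
          (\<forall>k k'. k \<noteq> k' \<longrightarrow> (\<forall>d d'.
              Re (transpose (RS S) $ k $ k' *
                  cinner (adot lam x y u v d k)
                         (proj_perp (steer_mat lam x y u v) *v adot lam x y u v d' k')) = 0))
          \<and> (\<forall>k. \<forall>(d, d') \<in> {(U, V), (V, U)}.
              cadj (steer_mat lam x y u v) *v
                (proj_perp_vec (steer lam x y u v k) *v
                   (adot lam x y u v d k - complex_of_real (zeta lam x y u v d k) *s adot lam x y u v d' k))
              = 0))

     \<and> (bnd_a = bnd_b \<longleftrightarrow>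
          cov x y = 0 \<and> var x = var y \<and> mean x = 0 \<and> mean y = 0 \<and>
          (\<forall>n. (x$n)\<^sup>2 + (y$n)\<^sup>2 = A\<^sup>2 / 2))"
proof -
  have Np: "real CARD('n) > 0" and Tp: "real CARD('t) > 0" and Kp: "real CARD('k) > 0"
    by (simp_all add: card_gt_0_iff)
  have en: "\<forall>k. sig_energy S k = real CARD('t) * Ps" using energy unfolding T_def .
  define c where "c = K * sigma2 * lam\<^sup>2 / (N * T * Ps * pi\<^sup>2)"
  have cp: "c > 0" unfolding c_def K_def N_def T_def using Np Tp Kp sigma2 lam Ps by simp
  let ?S = "1 / (var x - (cov x y)\<^sup>2 / var y) + 1 / (var y - (cov x y)\<^sup>2 / var x)"
  have ba: "bnd_a = c / 8 * ?S" unfolding bnd_a_def c_def by simp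
  have bb: "bnd_b = c / A\<^sup>2" unfolding bnd_b_def c_def by (simp add: field_simps)
  have ab: "bnd_a \<ge> bnd_b" unfolding ba bb by (rule bnd_b_lemma(1)[OF A cp square varx vary varcov])
  have abe: "bnd_a = bnd_b \<longleftrightarrow> cov x y = 0 \<and> var x = var y \<and> mean x = 0 \<and> mean y = 0 \<and>
          (\<forall>n. (x$n)\<^sup>2 + (y$n)\<^sup>2 = A\<^sup>2 / 2)"
    unfolding ba bb by (rule bnd_b_lemma(2)[OF A cp square varx vary varcov])
  have gen: "trace (CRB lam sigma2 x y uu vv SS) \<ge> bnd_a"
    if ok: "realization_ok lam sigma2 Ps x y uu vv SS" for uu vv :: "real^'k" and SS :: "complex^'t^'k"
    using ok unfolding realization_ok_def bnd_a_def K_def N_def T_def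
    using main_ineq(1)[OF lam sigma2 Ps _ _ varx vary varcov] by blast
  have I1: "trace (CRB lam sigma2 x y u v S) \<ge> bnd_a"
    using gen[of u v S] rank pd en unfolding realization_ok_def by blast
  have AV: "\<forall>(M::nat) (uu :: nat \<Rightarrow> real^'k) (vv :: nat \<Rightarrow> real^'k) (SS :: nat \<Rightarrow> complex^'t^'k).
          M \<ge> 1 \<and> (\<forall>m\<in>{1..M}. realization_ok lam sigma2 Ps x y (uu m) (vv m) (SS m)) \<longrightarrow>
          (let avg = (\<Sum>m=1..M. trace (CRB lam sigma2 x y (uu m) (vv m) (SS m))) / real M
           in avg \<ge> bnd_a \<and> avg \<ge> bnd_b)"
  proof (intro allI impI)
    fix M :: nat and uu vv :: "nat \<Rightarrow> real^'k" and SS :: "nat \<Rightarrow> complex^'t^'k"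
    assume h: "M \<ge> 1 \<and> (\<forall>m\<in>{1..M}. realization_ok lam sigma2 Ps x y (uu m) (vv m) (SS m))"
    have "(\<Sum>m=1..M. bnd_a) \<le> (\<Sum>m=1..M. trace (CRB lam sigma2 x y (uu m) (vv m) (SS m)))"
      using h gen by (intro sum_mono) blast
    then have "real M * bnd_a \<le> (\<Sum>m=1..M. trace (CRB lam sigma2 x y (uu m) (vv m) (SS m)))"
      by simp
    moreover have "real M > 0" using h by simp
    ultimately have "(\<Sum>m=1..M. trace (CRB lam sigma2 x y (uu m) (vv m) (SS m))) / real M \<ge> bnd_a"
      by (simp add: field_simps)
    then show "let avg = (\<Sum>m=1..M. trace (CRB lam sigma2 x y (uu m) (vv m) (SS m))) / real M
           in avg \<ge> bnd_a \<and> avg \<ge> bnd_b"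
      using ab unfolding Let_def by linarith
  qed
  have EQ: "trace (CRB lam sigma2 x y u v S) = bnd_a \<longleftrightarrow>
          (\<forall>k k'. k \<noteq> k' \<longrightarrow> (\<forall>d d'.
              Re (transpose (RS S) $ k $ k' *
                  cinner (adot lam x y u v d k)
                         (proj_perp (steer_mat lam x y u v) *v adot lam x y u v d' k')) = 0))
          \<and> (\<forall>k. \<forall>(d, d') \<in> {(U, V), (V, U)}.
              cadj (steer_mat lam x y u v) *v
                (proj_perp_vec (steer lam x y u v k) *v
                   (adot lam x y u v d k - complex_of_real (zeta lam x y u v d k) *s adot lam x y u v d' k))
              = 0)"
    unfolding bnd_a_def K_def N_def T_def
    by (rule main_eq[OF lam sigma2 Ps rank pd varx vary varcov en])
  show ?thesis using I1 ab AV EQ abe by blast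
qed


end
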